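(* Let $l>0$ and let $a\in L^\infty(-l,l)$ be an odd function. Let $b\in W^{1,\infty}(-l,l)$ be a primitive of $a$ ($b'=a$ a.e.), set $b_1:=\min_{0\le x\le l}b(x)$, $b_2:=\max_{0\le x\le l}b(x)$, $b_0:=b_2-b_1$, $B_i:=\{x\in[0,l]:\ b(x)=b_i\}$ ($i=1,2$), and assume $\max_{x\in B_1}x<\min_{y\in B_2}y$. For $p>0$ let $\lambda_1(p)>0$ be the principal eigenvalue of $$-u''+p\,a(x)u'=\lambda u\ \ (-l<x<l),\qquad u(-l)=u(l)=0,\qquad u>0\text{ on }(-l,l).$$ Then $$\lim_{p\to\infty}\frac1p\log\frac1{\lambda_1(p)}=b_0 .$$ Equivalently, for every $\varepsilon\in(0,b_0)$ there exists $p_0>0$ such that $e^{-p(b_0+\varepsilon)}\le\lambda_1(p)\le e^{-p(b_0-\varepsilon)}$ for all $p\ge p_0$. *)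

theory Defs
  imports "HOL-Analysis.Analysis"
begin

text \<open>Strong (W^{2,1}) solutions of the Dirichlet problem
  -u'' + p a(x) u' = lam u on (-l,l), u(-l) = u(l) = 0, u > 0 on (-l,l).
  u is C^1 on [-l,l] with derivative u', and u' is absolutely continuous with
  a.e. derivative u'' (i.e. u' is the indefinite integral of an L^1 function u''),
  and the equation holds almost everywhere.\<close>
definition positive_eigenpair ::
  "(real \<Rightarrow> real) \<Rightarrow> real \<Rightarrow> real \<Rightarrow> real \<Rightarrow> (real \<Rightarrow> real) \<Rightarrow> bool" where
  "positive_eigenpair a l p lam u \<longleftrightarrow>
     (\<exists>u' u''.
        (\<forall>x\<in>{-l..l}. (u has_real_derivative u' x) (at x within {-l..l})) \<and>
        u'' absolutely_integrable_on {-l..l} \<and>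
        (\<forall>x\<in>{-l..l}. u' x = u' (-l) + integral {-l..x} u'') \<and>
        (AE x in lborel. x \<in> {-l<..<l} \<longrightarrow> - u'' x + p * a x * u' x = lam * u x)) \<and>
     u (-l) = 0 \<and> u l = 0 \<and> (\<forall>x\<in>{-l<..<l}. u x > 0)"

definition principal_eigenvalue :: "(real \<Rightarrow> real) \<Rightarrow> real \<Rightarrow> real \<Rightarrow> real" where
  "principal_eigenvalue a l p = (THE lam. \<exists>u. positive_eigenpair a l p lam u)"

end

theory Submission
  imports Defs
begin

lemma AE_lborel_negligible:
  assumes "AE x in lborel. P x"
  obtains N where "negligible N" "\<And>x. x \<notin> N \<Longrightarrow> P x"
proof -
  from assms obtain N where N: "{x \<in> space lborel. \<not> P x} \<subseteq> N" "emeasure lborel N = 0" "N \<in> sets lborel"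
    by (auto elim: AE_E)
  have "N \<in> null_sets lborel" using N by auto
  then have "N \<in> null_sets lebesgue" by (rule null_sets_completionI)
  then have "negligible N" by (simp add: negligible_iff_null_sets)
  moreover have "\<And>x. x \<notin> N \<Longrightarrow> P x" using N by auto
  ultimately show ?thesis using that by blast
qed

lemma diffquot_seq:
  fixes f :: "real \<Rightarrow> real"
  assumes "(f has_real_derivative D) (at x)"
  shows "(\<lambda>k. (f (x + inverse (real (Suc k))) - f x) / inverse (real (Suc k))) \<longlonglongrightarrow> D"
proof -
  have lim: "((\<lambda>y. (f y - f x) / (y - x)) \<longlongrightarrow> D) (at x)"
    using assms by (simp add: has_field_derivative_iff)
  have "(\<lambda>k. x + inverse (real (Suc k))) \<longlonglongrightarrow> x + 0"
    by (intro tendsto_intros LIMSEQ_inverse_real_of_nat)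
  then have "filterlim (\<lambda>k. x + inverse (real (Suc k))) (at x) sequentially"
    by (intro filterlim_atI) auto
  from filterlim_compose[OF lim this]
  show ?thesis by simp
qed

lemma lip_ftc:
  fixes F g :: "real \<Rightarrow> real"
  assumes ab: "\<alpha> \<le> \<beta>" and lip: "L-lipschitz_on {\<alpha>..\<beta>} F"
   and N: "negligible N" and der: "\<And>x. x \<in> {\<alpha><..<\<beta>} \<Longrightarrow> x \<notin> N \<Longrightarrow> (F has_real_derivative g x) (at x)"
  shows "g integrable_on {\<alpha>..\<beta>}" "integral {\<alpha>..\<beta>} g = F \<beta> - F \<alpha>"
proof -
  define cl where "cl x = max \<alpha> (min \<beta> x)" for x :: real
  define Fe where "Fe x = F (cl x)" for x
  have clin: "cl x \<in> {\<alpha>..\<beta>}" for x using ab by (auto simp: cl_def)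
  have cld: "dist (cl x) (cl y) \<le> dist x y" for x y by (auto simp: cl_def dist_real_def)
  have L0: "L \<ge> 0" using lip lipschitz_on_nonneg by blast
  have Fe_lip: "dist (Fe x) (Fe y) \<le> L * dist x y" for x y
  proof -
    have "dist (Fe x) (Fe y) \<le> L * dist (cl x) (cl y)"
      unfolding Fe_def using lipschitz_onD[OF lip clin clin] by blast
    also have "\<dots> \<le> L * dist x y" using cld L0 by (simp add: mult_left_mono)
    finally show ?thesis .
  qed
  have Fe_cont: "continuous_on UNIV Fe"
    by (rule lipschitz_on_continuous_on[of L], rule lipschitz_onI) (use Fe_lip L0 in auto)
  have FeF: "x \<in> {\<alpha>..\<beta>} \<Longrightarrow> Fe x = F x" for x by (auto simp: Fe_def cl_def)
  define h where "h k = inverse (real (Suc k))" for k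
  have hpos: "h k > 0" for k by (simp add: h_def)
  have hle: "h k \<le> 1" for k by (simp add: h_def inverse_le_1_iff)
  define Q where "Q k x = (Fe (x + h k) - Fe x) / h k" for k x
  define Z where "Z = N \<union> {\<alpha>, \<beta>}"
  have Z: "negligible Z" using N by (simp add: Z_def)
  define Q' where "Q' k x = (if x \<in> Z then 0 else Q k x)" for k x
  define gg where "gg x = (if x \<in> Z then 0 else g x)" for x
  have Qcont: "continuous_on {\<alpha>..\<beta>} (Q k)" for k
    unfolding Q_def
    by (intro continuous_intros continuous_on_compose2[OF Fe_cont]) (use hpos[of k] in auto)
  have Qint: "Q k integrable_on {\<alpha>..\<beta>}" for k by (rule integrable_continuous_interval[OF Qcont])
  have Q'int: "Q' k integrable_on {\<alpha>..\<beta>}" for k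
    by (rule integrable_spike[OF Qint Z]) (auto simp: Q'_def)
  have Qbd: "norm (Q' k x) \<le> L" for k x
  proof -
    have "\<bar>Fe (x + h k) - Fe x\<bar> \<le> L * h k"
      using Fe_lip[of "x + h k" x] hpos[of k] by (simp add: dist_real_def)
    then have "\<bar>Q k x\<bar> \<le> L" using hpos[of k] by (simp add: Q_def abs_divide divide_le_eq)
    then show ?thesis using L0 by (auto simp: Q'_def)
  qed
  have conv: "(\<lambda>k. Q' k x) \<longlonglongrightarrow> gg x" if x: "x \<in> {\<alpha>..\<beta>}" for x
  proof (cases "x \<in> Z")
    case True then show ?thesis by (simp add: Q'_def gg_def)
  next
    case False
    then have xi: "x \<in> {\<alpha><..<\<beta>}" "x \<notin> N" using x by (auto simp: Z_def)
    have "(\<lambda>k. (F (x + h k) - F x) / h k) \<longlonglongrightarrow> g x"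
      using diffquot_seq[OF der[OF xi]] by (simp add: h_def)
    moreover have "\<forall>\<^sub>F k in sequentially. (F (x + h k) - F x) / h k = Q' k x"
    proof -
      have "(\<lambda>k. h k) \<longlonglongrightarrow> 0" unfolding h_def by (rule LIMSEQ_inverse_real_of_nat)
      then have "\<forall>\<^sub>F k in sequentially. h k < \<beta> - x" using xi
        by (intro order_tendstoD) auto
      then show ?thesis
      proof (rule eventually_mono)
        fix k assume "h k < \<beta> - x"
        then have "x + h k \<in> {\<alpha>..\<beta>}" using xi hpos[of k] by auto
        then show "(F (x + h k) - F x) / h k = Q' k x"
          using False x by (simp add: Q'_def Q_def FeF)
      qed
    qed
    ultimately have "(\<lambda>k. Q' k x) \<longlonglongrightarrow> g x" by (rule Lim_transform_eventually)
    then show ?thesis using False by (simp add: gg_def)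
  qed
  have hint: "(\<lambda>_. L) integrable_on {\<alpha>..\<beta>}" by (rule integrable_continuous_interval) (rule continuous_on_const)
  have Qbd': "\<And>k x. x \<in> {\<alpha>..\<beta>} \<Longrightarrow> norm (Q' k x) \<le> L" using Qbd by blast
  note dc = dominated_convergence[of Q' "{\<alpha>..\<beta>}" "\<lambda>_. L" gg, OF Q'int hint Qbd' conv]
  show gint: "g integrable_on {\<alpha>..\<beta>}"
    by (rule integrable_spike[OF dc(1) Z]) (auto simp: gg_def)
  have ggg: "integral {\<alpha>..\<beta>} gg = integral {\<alpha>..\<beta>} g"
    by (rule integral_spike[OF Z]) (auto simp: gg_def)
  define c where "c = \<alpha> - 1"
  define d where "d = \<beta> + 2"
  define G where "G y = integral {c..y} Fe" for y
  have Gder: "(G has_real_derivative Fe y) (at y)" if "c < y" "y < d" for y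
  proof -
    have "(G has_real_derivative Fe y) (at y within {c..d})"
      unfolding G_def
      by (rule integral_has_real_derivative) (use that Fe_cont continuous_on_subset in auto)
    then show ?thesis using at_within_Icc_at[OF that] by simp
  qed
  have intQ: "integral {\<alpha>..\<beta>} (Q' k) = (G (\<beta> + h k) - G \<beta>) / h k - (G (\<alpha> + h k) - G \<alpha>) / h k" for k
  proof -
    have "integral {\<alpha>..\<beta>} (Q' k) = integral {\<alpha>..\<beta>} (Q k)"
      by (rule integral_spike[OF Z]) (auto simp: Q'_def)
    have i1: "((\<lambda>x. Fe (x + h k)) has_integral (G (\<beta> + h k) - G (\<alpha> + h k))) {\<alpha>..\<beta>}"
    proof (rule fundamental_theorem_of_calculus[OF ab])
      fix x assume x: "x \<in> {\<alpha>..\<beta>}"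
      have "(G has_real_derivative Fe (x + h k)) (at (x + h k))"
        by (rule Gder) (use x hpos[of k] hle[of k] in \<open>auto simp: c_def d_def\<close>)
      then have "((\<lambda>x. G (x + h k)) has_real_derivative Fe (x + h k)) (at x)"
        by (simp add: DERIV_shift)
      then show "((\<lambda>x. G (x + h k)) has_vector_derivative Fe (x + h k)) (at x within {\<alpha>..\<beta>})"
        by (simp add: has_real_derivative_iff_has_vector_derivative has_vector_derivative_at_within)
    qed
    have i2: "(Fe has_integral (G \<beta> - G \<alpha>)) {\<alpha>..\<beta>}"
    proof (rule fundamental_theorem_of_calculus[OF ab])
      fix x assume x: "x \<in> {\<alpha>..\<beta>}"
      have "(G has_real_derivative Fe x) (at x)"
        by (rule Gder) (use x in \<open>auto simp: c_def d_def\<close>)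
      then show "(G has_vector_derivative Fe x) (at x within {\<alpha>..\<beta>})"
        by (simp add: has_real_derivative_iff_has_vector_derivative has_vector_derivative_at_within)
    qed
    have "(Q k has_integral ((G (\<beta> + h k) - G (\<alpha> + h k)) - (G \<beta> - G \<alpha>)) / h k) {\<alpha>..\<beta>}"
      unfolding Q_def using has_integral_divide[OF has_integral_diff[OF i1 i2], of "h k"] by simp
    then have "integral {\<alpha>..\<beta>} (Q k) = ((G (\<beta> + h k) - G (\<alpha> + h k)) - (G \<beta> - G \<alpha>)) / h k"
      by (rule integral_unique)
    also have "\<dots> = (G (\<beta> + h k) - G \<beta>) / h k - (G (\<alpha> + h k) - G \<alpha>) / h k"
      by (simp add: diff_divide_distrib)
    finally show ?thesis using \<open>integral {\<alpha>..\<beta>} (Q' k) = integral {\<alpha>..\<beta>} (Q k)\<close> by simp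
  qed
  have "(\<lambda>k. (G (\<beta> + h k) - G \<beta>) / h k - (G (\<alpha> + h k) - G \<alpha>) / h k) \<longlonglongrightarrow> Fe \<beta> - Fe \<alpha>"
    unfolding h_def
    by (intro tendsto_diff diffquot_seq Gder) (use ab in \<open>auto simp: c_def d_def\<close>)
  then have "(\<lambda>k. integral {\<alpha>..\<beta>} (Q' k)) \<longlonglongrightarrow> F \<beta> - F \<alpha>"
    using intQ FeF ab by simp
  from LIMSEQ_unique[OF dc(2) this] show "integral {\<alpha>..\<beta>} g = F \<beta> - F \<alpha>"
    using ggg by simp
qed

lemma integral_pos:
  fixes f :: "real \<Rightarrow> real"
  assumes "continuous_on {\<alpha>..\<beta>} f" "\<alpha> < \<beta>" "\<And>x. x \<in> {\<alpha>..\<beta>} \<Longrightarrow> f x \<ge> 0"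
    and "x0 \<in> {\<alpha>..\<beta>}" "f x0 > 0"
  shows "integral {\<alpha>..\<beta>} f > 0"
proof -
  have "integral {\<alpha>..\<beta>} f \<ge> 0"
    by (rule integral_nonneg[OF integrable_continuous_interval[OF assms(1)]]) (use assms in auto)
  moreover have "integral {\<alpha>..\<beta>} f \<noteq> 0"
    using integral_eq_0_iff[OF assms(1-3)] assms(4,5) by auto
  ultimately show ?thesis by linarith
qed

lemma ftc_within:
  fixes f f' :: "real \<Rightarrow> real"
  assumes "\<alpha> \<le> \<beta>" "\<And>x. x \<in> {\<alpha>..\<beta>} \<Longrightarrow> (f has_real_derivative f' x) (at x within {\<alpha>..\<beta>})"
  shows "(f' has_integral (f \<beta> - f \<alpha>)) {\<alpha>..\<beta>}"
  by (rule fundamental_theorem_of_calculus[OF assms(1)])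
     (use assms(2) in \<open>simp add: has_real_derivative_iff_has_vector_derivative\<close>)

lemma deriv_lip:
  fixes f f' :: "real \<Rightarrow> real"
  assumes "\<And>x. x \<in> {\<alpha>..\<beta>} \<Longrightarrow> (f has_real_derivative f' x) (at x within {\<alpha>..\<beta>})"
    and "\<And>x. x \<in> {\<alpha>..\<beta>} \<Longrightarrow> \<bar>f' x\<bar> \<le> B" and "0 \<le> B"
  shows "B-lipschitz_on {\<alpha>..\<beta>} f"
proof (rule bounded_derivative_imp_lipschitz[of _ _ "\<lambda>x h. f' x * h"])
  show "(f has_derivative (\<lambda>h. f' x * h)) (at x within {\<alpha>..\<beta>})" if "x \<in> {\<alpha>..\<beta>}" for x
    using assms(1)[OF that] by (simp add: has_field_derivative_def)
  show "onorm (\<lambda>h. f' x * h) \<le> B" if "x \<in> {\<alpha>..\<beta>}" for x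
    by (rule onorm_le) (use assms(2)[OF that] in \<open>auto simp: abs_mult intro: mult_right_mono\<close>)
qed (use assms in auto)

lemma lip_mult:
  fixes f g :: "real \<Rightarrow> real"
  assumes "A-lipschitz_on S f" "C-lipschitz_on S g" "\<And>x. x \<in> S \<Longrightarrow> \<bar>f x\<bar> \<le> Bf" "\<And>x. x \<in> S \<Longrightarrow> \<bar>g x\<bar> \<le> Bg"
    and "0 \<le> Bf" "0 \<le> Bg"
  shows "(Bf * C + Bg * A)-lipschitz_on S (\<lambda>x. f x * g x)"
proof (rule lipschitz_onI)
  have A0: "A \<ge> 0" "C \<ge> 0" using assms(1,2) lipschitz_on_nonneg by blast+
  then show "0 \<le> Bf * C + Bg * A" using assms by simp
  fix x y assume xy: "x \<in> S" "y \<in> S"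
  have "f x * g x - f y * g y = f x * (g x - g y) + g y * (f x - f y)" by algebra
  then have "\<bar>f x * g x - f y * g y\<bar> \<le> \<bar>f x\<bar> * \<bar>g x - g y\<bar> + \<bar>g y\<bar> * \<bar>f x - f y\<bar>"
    by (metis abs_mult abs_triangle_ineq)
  also have "\<dots> \<le> Bf * (C * \<bar>x - y\<bar>) + Bg * (A * \<bar>x - y\<bar>)"
  proof (intro add_mono mult_mono)
    show "\<bar>g x - g y\<bar> \<le> C * \<bar>x - y\<bar>" using lipschitz_onD[OF assms(2) xy] by (simp add: dist_real_def)
    show "\<bar>f x - f y\<bar> \<le> A * \<bar>x - y\<bar>" using lipschitz_onD[OF assms(1) xy] by (simp add: dist_real_def)
  qed (use assms xy in auto)
  finally show "dist (f x * g x) (f y * g y) \<le> (Bf * C + Bg * A) * dist x y"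
    by (simp add: dist_real_def algebra_simps)
qed

locale eig =
  fixes a b :: "real \<Rightarrow> real" and l p M L :: real and N :: "real set"
  assumes l_pos: "0 < l" and p_pos: "0 < p" and M_nonneg: "0 \<le> M"
    and Nneg: "negligible N"
    and a_bdd: "\<And>x. \<bar>a x\<bar> \<le> M"
    and b_der: "\<And>x. x \<in> {-l<..<l} \<Longrightarrow> x \<notin> N \<Longrightarrow> (b has_real_derivative a x) (at x)"
    and b_lip: "L-lipschitz_on {-l..l} b"
begin

definition w where "w x = exp (- p * b x)"
definition iw where "iw x = exp (p * b x)"
definition bmin where "bmin = Inf (b ` {-l..l})"
definition bmax where "bmax = Sup (b ` {-l..l})"
definition Wmax where "Wmax = exp (- p * bmin)"
definition Imax where "Imax = exp (p * bmax)"

lemma L_nonneg: "0 \<le> L" using b_lip lipschitz_on_nonneg by blast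

lemma b_cont: "continuous_on {-l..l} b"
  using b_lip by (rule lipschitz_on_continuous_on)

lemma b_bounds: "x \<in> {-l..l} \<Longrightarrow> bmin \<le> b x \<and> b x \<le> bmax"
proof -
  assume x: "x \<in> {-l..l}"
  have "compact (b ` {-l..l})" by (rule compact_continuous_image[OF b_cont]) simp
  then have bd: "bounded (b ` {-l..l})" by (rule compact_imp_bounded)
  show ?thesis unfolding bmin_def bmax_def
    using x bd by (auto intro!: cInf_lower cSup_upper bounded_imp_bdd_below bounded_imp_bdd_above)
qed

lemma w_pos: "w x > 0" by (simp add: w_def)
lemma iw_pos: "iw x > 0" by (simp add: iw_def)
lemma w_iw: "w x * iw x = 1" by (simp add: w_def iw_def exp_add[symmetric])
lemma iw_w: "iw x * w x = 1" by (simp add: w_def iw_def exp_add[symmetric])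
lemma w_le: "x \<in> {-l..l} \<Longrightarrow> w x \<le> Wmax"
  using b_bounds[of x] p_pos by (simp add: w_def Wmax_def)
lemma iw_le: "x \<in> {-l..l} \<Longrightarrow> iw x \<le> Imax"
  using b_bounds[of x] p_pos by (simp add: iw_def Imax_def)
lemma Wmax_pos: "Wmax > 0" by (simp add: Wmax_def)
lemma Imax_pos: "Imax > 0" by (simp add: Imax_def)

lemma w_cont: "continuous_on {-l..l} w"
  unfolding w_def by (intro continuous_intros b_cont)
lemma iw_cont: "continuous_on {-l..l} iw"
  unfolding iw_def by (intro continuous_intros b_cont)

lemma iw_der: "x \<in> {-l<..<l} \<Longrightarrow> x \<notin> N \<Longrightarrow> (iw has_real_derivative p * a x * iw x) (at x)"
  unfolding iw_def by (auto intro!: derivative_eq_intros b_der)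

lemma iw_lip: "(Imax * (p * L))-lipschitz_on {-l..l} iw"
proof -
  have 1: "(p * L)-lipschitz_on {-l..l} (\<lambda>x. p * b x)"
    using lipschitz_on_cmult_real_nonneg[OF b_lip, of p] p_pos by simp
  have 2: "Imax-lipschitz_on ((\<lambda>x. p * b x) ` {-l..l}) exp"
  proof (rule lipschitz_on_subset)
    show "Imax-lipschitz_on {p * bmin..p * bmax} exp"
      by (rule deriv_lip[of _ _ exp exp]) (auto intro!: derivative_eq_intros simp: Imax_def Imax_pos[unfolded Imax_def, THEN less_imp_le])
    show "(\<lambda>x. p * b x) ` {-l..l} \<subseteq> {p * bmin..p * bmax}"
      using b_bounds p_pos by auto
  qed
  show ?thesis using lipschitz_on_compose2[OF 1 2] by (simp add: iw_def)
qed

definition vsol where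
  "vsol lam u V \<longleftrightarrow> (\<forall>x\<in>{-l..l}. (u has_real_derivative V x * iw x) (at x within {-l..l}) \<and>
      (V has_real_derivative (- lam * w x * u x)) (at x within {-l..l}))"

lemma vsol_cont:
  assumes "vsol lam u V" shows "continuous_on {-l..l} u" "continuous_on {-l..l} V"
  using assms unfolding vsol_def
  by (auto simp: continuous_on_eq_continuous_within intro: DERIV_continuous)

end

context eig begin

lemma vsolD:
  assumes "vsol lam u V" "x \<in> {-l..l}"
  shows "(u has_real_derivative V x * iw x) (at x within {-l..l})"
        "(V has_real_derivative (- lam * w x * u x)) (at x within {-l..l})"
  using assms unfolding vsol_def by auto

lemma vsol_unique:
  assumes s1: "vsol lam u1 V1" and s2: "vsol mu u2 V2"
    and bc: "u1 (-l) = 0" "u1 l = 0" "u2 (-l) = 0" "u2 l = 0"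
    and pos: "\<forall>x\<in>{-l<..<l}. u1 x > 0" "\<forall>x\<in>{-l<..<l}. u2 x > 0"
  shows "lam = mu"
proof -
  let ?W = "\<lambda>x. V1 x * u2 x - u1 x * V2 x"
  have der: "(?W has_real_derivative (mu - lam) * (w x * u1 x * u2 x)) (at x within {-l..l})"
    if x: "x \<in> {-l..l}" for x
    by (rule DERIV_cong[OF DERIV_diff[OF DERIV_mult[OF vsolD(2)[OF s1 x] vsolD(1)[OF s2 x]]
          DERIV_mult[OF vsolD(1)[OF s1 x] vsolD(2)[OF s2 x]]]]) (simp add: algebra_simps)
  have "((\<lambda>x. (mu - lam) * (w x * u1 x * u2 x)) has_integral (?W l - ?W (-l))) {-l..l}"
    by (rule ftc_within) (use l_pos der in auto)
  then have "((\<lambda>x. (mu - lam) * (w x * u1 x * u2 x)) has_integral 0) {-l..l}"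
    using bc by simp
  then have "integral {-l..l} (\<lambda>x. (mu - lam) * (w x * u1 x * u2 x)) = 0"
    by (rule integral_unique)
  then have eq: "(mu - lam) * integral {-l..l} (\<lambda>x. w x * u1 x * u2 x) = 0"
    by (simp only: integral_mult_right)
  have "integral {-l..l} (\<lambda>x. w x * u1 x * u2 x) > 0"
  proof (rule integral_pos[of _ _ _ 0])
    show "continuous_on {-l..l} (\<lambda>x. w x * u1 x * u2 x)"
      using vsol_cont[OF s1] vsol_cont[OF s2] w_cont by (intro continuous_intros) auto
    show "0 \<le> w x * u1 x * u2 x" if "x \<in> {-l..l}" for x
    proof (cases "x = -l \<or> x = l")
      case True then show ?thesis using bc by auto
    next
      case False then show ?thesis using that pos w_pos[of x]
        by (auto intro!: mult_nonneg_nonneg less_imp_le)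
    qed
    show "0 < w 0 * u1 0 * u2 0" using pos l_pos w_pos[of 0] by auto
  qed (use l_pos in auto)
  then show ?thesis using eq by simp
qed

end

context eig begin

lemma w_int_cont: "continuous_on {-l..l} (\<lambda>s. integral {-l..s} w)"
  by (rule indefinite_integral_continuous_1[OF integrable_continuous_interval[OF w_cont]])

lemma vsol_lower:
  assumes s: "vsol lam u V" and bc: "u (-l) = 0" "u l = 0"
    and pos: "\<forall>x\<in>{-l<..<l}. u x > 0" and lam0: "lam \<ge> 0"
  shows "lam \<ge> 1 / (4 * l^2 * Imax * Wmax)"
proof (rule ccontr)
  assume "\<not> ?thesis"
  then have lamK: "lam * (4 * l^2 * Imax * Wmax) < 1"
    using l_pos Imax_pos Wmax_pos by (simp add: field_simps)
  define Wi where "Wi s = integral {-l..s} w" for s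
  define P where "P = integral {-l..l} iw"
  define Q where "Q = integral {-l..l} (\<lambda>s. iw s * Wi s)"
  define C where "C = Q / P"
  define T where "T x = integral {-l..x} (\<lambda>s. iw s * (C - Wi s))" for x
  have Wi_cont: "continuous_on {-l..l} Wi" unfolding Wi_def by (rule w_int_cont)
  have Wi_der: "(Wi has_real_derivative w x) (at x within {-l..l})" if "x \<in> {-l..l}" for x
    unfolding Wi_def by (rule integral_has_real_derivative[OF w_cont that])
  have wint: "w integrable_on {c..d}" if "{c..d} \<subseteq> {-l..l}" for c d
    by (rule integrable_continuous_interval, rule continuous_on_subset[OF w_cont that])
  have wnn: "integral {c..d} w \<ge> 0" if "{c..d} \<subseteq> {-l..l}" for c d
    by (rule integral_nonneg[OF wint[OF that]]) (simp add: w_pos less_imp_le)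
  have Wi_mono: "0 \<le> Wi x \<and> Wi x \<le> Wi l" if x: "x \<in> {-l..l}" for x
  proof -
    have "integral {-l..x} w + integral {x..l} w = integral {-l..l} w"
      by (rule Henstock_Kurzweil_Integration.integral_combine) (use x wint[of "-l" l] in auto)
    moreover have "integral {-l..x} w \<ge> 0" by (rule wnn) (use x in auto)
    moreover have "integral {x..l} w \<ge> 0" by (rule wnn) (use x in auto)
    ultimately show ?thesis unfolding Wi_def by linarith
  qed
  have Wil: "Wi l \<le> Wmax * (2 * l)"
  proof -
    have "norm (integral {-l..l} w) \<le> Wmax * (l - - l)"
      by (rule integral_bound) (use l_pos w_cont w_le w_pos in \<open>auto simp: abs_of_pos\<close>)
    then show ?thesis by (simp add: Wi_def)
  qed
  have Ppos: "P > 0" unfolding P_def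
    by (rule integral_pos[of _ _ _ 0]) (use l_pos iw_cont iw_pos in \<open>auto intro: less_imp_le\<close>)
  have iwWi_cont: "continuous_on {-l..l} (\<lambda>s. iw s * Wi s)"
    by (intro continuous_intros iw_cont Wi_cont)
  have Q0: "Q \<ge> 0" unfolding Q_def
    by (rule integral_nonneg[OF integrable_continuous_interval[OF iwWi_cont]])
       (use Wi_mono iw_pos in \<open>auto intro: mult_nonneg_nonneg less_imp_le\<close>)
  have iwc: "(\<lambda>s. iw s * Wi l) integrable_on {-l..l}"
    by (rule integrable_continuous_interval) (intro continuous_intros iw_cont)
  have "Q \<le> integral {-l..l} (\<lambda>s. iw s * Wi l)" unfolding Q_def
  proof (rule integral_le[OF integrable_continuous_interval[OF iwWi_cont] iwc])
    fix x assume "x \<in> {-l..l}"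
    then show "iw x * Wi x \<le> iw x * Wi l"
      using Wi_mono iw_pos[of x] by (simp add: mult_left_mono less_imp_le)
  qed
  also have "\<dots> = P * Wi l" by (simp add: P_def)
  finally have QP: "Q \<le> P * Wi l" .
  have C0: "0 \<le> C" "C \<le> Wi l" using Q0 QP Ppos by (auto simp: C_def field_simps)
  have CWi: "\<bar>C - Wi x\<bar> \<le> Wmax * (2 * l)" if "x \<in> {-l..l}" for x
    using Wi_mono[OF that] C0 Wil by auto
  have Tf_cont: "continuous_on {-l..l} (\<lambda>s. iw s * (C - Wi s))"
    by (intro continuous_intros iw_cont Wi_cont)
  have T_der: "(T has_real_derivative iw x * (C - Wi x)) (at x within {-l..l})" if "x \<in> {-l..l}" for x
    unfolding T_def by (rule integral_has_real_derivative[OF Tf_cont that])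
  have Tm: "T (-l) = 0" by (simp add: T_def)
  have Tp: "T l = 0"
  proof -
    have "T l = integral {-l..l} (\<lambda>s. C * iw s - iw s * Wi s)"
      unfolding T_def by (simp add: algebra_simps)
    also have "\<dots> = C * P - Q"
    proof -
      have i1: "(\<lambda>s. C * iw s) integrable_on {-l..l}"
        by (rule integrable_continuous_interval) (intro continuous_intros iw_cont)
      have i2: "(\<lambda>s. iw s * Wi s) integrable_on {-l..l}"
        by (rule integrable_continuous_interval[OF iwWi_cont])
      show ?thesis by (simp add: integral_diff[OF i1 i2] P_def Q_def)
    qed
    also have "\<dots> = 0" using Ppos by (simp add: C_def)
    finally show ?thesis .
  qed
  have Tbd: "\<bar>T x\<bar> \<le> 4 * l^2 * Imax * Wmax" if x: "x \<in> {-l..l}" for x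
  proof -
    have "norm (T x) \<le> (Imax * (Wmax * (2 * l))) * (x - - l)"
      unfolding T_def
    proof (rule integral_bound)
      show "continuous_on {-l..x} (\<lambda>s. iw s * (C - Wi s))"
        by (rule continuous_on_subset[OF Tf_cont]) (use x in auto)
      fix t assume t: "t \<in> {-l..x}"
      then have t': "t \<in> {-l..l}" using x by auto
      show "norm (iw t * (C - Wi t)) \<le> Imax * (Wmax * (2 * l))"
        unfolding real_norm_def abs_mult
        by (rule mult_mono) (use iw_le[OF t'] CWi[OF t'] iw_pos[of t] in auto)
    qed (use x in auto)
    also have "\<dots> \<le> (Imax * (Wmax * (2 * l))) * (2 * l)"
      by (rule mult_left_mono) (use x l_pos Imax_pos Wmax_pos in auto)
    finally show ?thesis by (simp add: power2_eq_square algebra_simps)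
  qed
  let ?G = "\<lambda>x. V x * T x - u x * (C - Wi x)"
  have der: "(?G has_real_derivative w x * u x * (1 - lam * T x)) (at x within {-l..l})"
    if x: "x \<in> {-l..l}" for x
  proof -
    have d: "((\<lambda>x. C - Wi x) has_real_derivative (0 - w x)) (at x within {-l..l})"
      by (intro DERIV_diff DERIV_const Wi_der x)
    show ?thesis
      by (rule DERIV_cong[OF DERIV_diff[OF DERIV_mult[OF vsolD(2)[OF s x] T_der[OF x]]
          DERIV_mult[OF vsolD(1)[OF s x] d]]]) (simp add: algebra_simps)
  qed
  have "((\<lambda>x. w x * u x * (1 - lam * T x)) has_integral (?G l - ?G (-l))) {-l..l}"
    by (rule ftc_within) (use l_pos der in auto)
  then have "integral {-l..l} (\<lambda>x. w x * u x * (1 - lam * T x)) = 0"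
    using bc Tm Tp by (simp add: integral_unique)
  moreover have "integral {-l..l} (\<lambda>x. w x * u x * (1 - lam * T x)) > 0"
  proof (rule integral_pos[of _ _ _ 0])
    have "continuous_on {-l..l} T"
      unfolding continuous_on_eq_continuous_within using T_der DERIV_continuous by blast
    then show "continuous_on {-l..l} (\<lambda>x. w x * u x * (1 - lam * T x))"
      using vsol_cont[OF s] w_cont by (intro continuous_intros) auto
    have one: "1 - lam * T x > 0" if "x \<in> {-l..l}" for x
    proof -
      have "lam * T x \<le> lam * \<bar>T x\<bar>" using lam0 by (simp add: mult_left_mono)
      also have "\<dots> \<le> lam * (4 * l^2 * Imax * Wmax)" using lam0 Tbd[OF that] by (simp add: mult_left_mono)
      finally show ?thesis using lamK by simp
    qed
    show "0 \<le> w x * u x * (1 - lam * T x)" if "x \<in> {-l..l}" for x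
    proof (cases "x = -l \<or> x = l")
      case True then show ?thesis using bc by auto
    next
      case False then show ?thesis using that pos w_pos[of x] one[OF that]
        by (auto intro!: mult_nonneg_nonneg less_imp_le)
    qed
    show "0 < w 0 * u 0 * (1 - lam * T 0)" using pos l_pos w_pos[of 0] one[of 0] by auto
  qed (use l_pos in auto)
  ultimately show False by simp
qed

end

lemma picone_alg:
  fixes X Y Uu Wv I c1 lam :: real
  assumes "Uu > 0" "Wv > 0" "Wv * I = 1"
  shows "(((2 * X * c1) * Y + (- lam * Wv * Uu) * X^2) * Uu - X^2 * Y * (Y * I)) / (Uu * Uu)
         = c1^2 * Wv - lam * (Wv * X^2) - Wv * (c1 - X * Y * I / Uu)^2"
proof -
  have I: "I = 1 / Wv" using assms by (simp add: field_simps)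
  show ?thesis using assms unfolding I by (simp add: field_simps power2_eq_square)
qed

context eig begin

lemma picone:
  assumes s: "vsol lam u V" and ab: "\<alpha> \<le> \<beta>" "-l \<le> \<alpha>" "\<beta> \<le> l"
    and pos: "\<forall>x\<in>{\<alpha>..\<beta>}. u x > 0"
  shows "(c0 + c1*\<beta>)^2 * V \<beta> / u \<beta> - (c0 + c1*\<alpha>)^2 * V \<alpha> / u \<alpha>
     \<le> c1^2 * integral {\<alpha>..\<beta>} w - lam * integral {\<alpha>..\<beta>} (\<lambda>x. w x * (c0 + c1*x)^2)"
proof -
  have sub: "{\<alpha>..\<beta>} \<subseteq> {-l..l}" using ab by auto
  define H where "H x = (c0 + c1*x)^2 * V x / u x" for x
  define H' where "H' x = (((2 * (c0 + c1*x) * c1) * V x + (- lam * w x * u x) * (c0 + c1*x)^2) * u x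
       - (c0 + c1*x)^2 * V x * (V x * iw x)) / (u x * u x)" for x
  have der: "(H has_real_derivative H' x) (at x within {\<alpha>..\<beta>})" if x: "x \<in> {\<alpha>..\<beta>}" for x
  proof -
    have x': "x \<in> {-l..l}" using x sub by auto
    have du: "(u has_real_derivative V x * iw x) (at x within {\<alpha>..\<beta>})"
      by (rule DERIV_subset[OF vsolD(1)[OF s x'] sub])
    have dV: "(V has_real_derivative - lam * w x * u x) (at x within {\<alpha>..\<beta>})"
      by (rule DERIV_subset[OF vsolD(2)[OF s x'] sub])
    have dp: "((\<lambda>x. (c0 + c1*x)^2) has_real_derivative 2 * (c0 + c1*x) * c1) (at x within {\<alpha>..\<beta>})"
      by (auto intro!: derivative_eq_intros)
    show ?thesis unfolding H_def H'_def
      by (rule DERIV_divide[OF DERIV_mult[OF dp dV] du]) (use pos x in force)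
  qed
  have "(H' has_integral (H \<beta> - H \<alpha>)) {\<alpha>..\<beta>}" by (rule ftc_within[OF ab(1) der])
  then have H'i: "H' integrable_on {\<alpha>..\<beta>}" "integral {\<alpha>..\<beta>} H' = H \<beta> - H \<alpha>"
    by (auto simp: integral_unique integrable_on_def)
  have wc: "continuous_on {\<alpha>..\<beta>} w" by (rule continuous_on_subset[OF w_cont sub])
  have i1: "(\<lambda>x. c1^2 * w x) integrable_on {\<alpha>..\<beta>}"
    by (rule integrable_continuous_interval) (intro continuous_intros wc)
  have i2: "(\<lambda>x. lam * (w x * (c0 + c1*x)^2)) integrable_on {\<alpha>..\<beta>}"
    by (rule integrable_continuous_interval) (intro continuous_intros wc)
  have "integral {\<alpha>..\<beta>} H' \<le> integral {\<alpha>..\<beta>} (\<lambda>x. c1^2 * w x - lam * (w x * (c0 + c1*x)^2))"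
  proof (rule integral_le[OF H'i(1)])
    show "(\<lambda>x. c1^2 * w x - lam * (w x * (c0 + c1*x)^2)) integrable_on {\<alpha>..\<beta>}"
      by (rule integrable_diff[OF i1 i2])
    fix x assume x: "x \<in> {\<alpha>..\<beta>}"
    have "H' x = c1^2 * w x - lam * (w x * (c0 + c1*x)^2) - w x * (c1 - (c0 + c1*x) * V x * iw x / u x)^2"
      unfolding H'_def by (rule picone_alg) (use pos x w_pos w_iw in auto)
    moreover have "w x * (c1 - (c0 + c1*x) * V x * iw x / u x)^2 \<ge> 0"
      using w_pos[of x] by simp
    ultimately show "H' x \<le> c1^2 * w x - lam * (w x * (c0 + c1*x)^2)" by linarith
  qed
  also have "\<dots> = c1^2 * integral {\<alpha>..\<beta>} w - lam * integral {\<alpha>..\<beta>} (\<lambda>x. w x * (c0 + c1*x)^2)"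
    by (simp add: integral_diff[OF i1 i2])
  finally show ?thesis using H'i(2) by (simp add: H_def)
qed

lemma trapezoid:
  assumes s: "vsol lam u V" and st: "0 < s" "s < t" "t < l"
    and pos: "\<forall>x\<in>{-t..t}. u x > 0" and lam0: "lam \<ge> 0"
  shows "lam * integral {-s..s} w \<le> (integral {-t..-s} w + integral {s..t} w) / (t - s)^2"
proof -
  have ts: "t - s > 0" using st by simp
  have wnn: "integral {c..d} (\<lambda>x. w x * f x ^ 2) \<ge> 0" if "{c..d} \<subseteq> {-l..l}" "continuous_on {c..d} f" for c d f
  proof (rule integral_nonneg)
    have "continuous_on {c..d} w" using continuous_on_subset[OF w_cont that(1)] .
    then show "(\<lambda>x. w x * f x ^ 2) integrable_on {c..d}"
      by (intro integrable_continuous_interval continuous_intros that(2))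
    show "0 \<le> w x * f x ^ 2" for x using w_pos[of x] by simp
  qed
  have p1: "(t/(t-s) + (1/(t-s))*(-s))^2 * V (-s) / u (-s) - (t/(t-s) + (1/(t-s))*(-t))^2 * V (-t) / u (-t)
     \<le> (1/(t-s))^2 * integral {-t..-s} w - lam * integral {-t..-s} (\<lambda>x. w x * (t/(t-s) + (1/(t-s))*x)^2)"
    by (rule picone[OF s]) (use st pos in auto)
  have p2: "V s / u s - V (-s) / u (-s) \<le> - (lam * integral {-s..s} w)"
    using picone[OF s, of "-s" s 1 0] st pos by simp
  have p3: "(t/(t-s) + (-1/(t-s))*t)^2 * V t / u t - (t/(t-s) + (-1/(t-s))* s)^2 * V s / u s
     \<le> (-1/(t-s))^2 * integral {s..t} w - lam * integral {s..t} (\<lambda>x. w x * (t/(t-s) + (-1/(t-s))*x)^2)"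
    by (rule picone[OF s]) (use st pos in auto)
  have e1: "t/(t-s) + (1/(t-s))*(-s) = 1" "t/(t-s) + (1/(t-s))*(-t) = 0"
    "t/(t-s) + (-1/(t-s))*t = 0" "t/(t-s) + (-1/(t-s))* s = 1"
  proof -
    have ne: "t - s \<noteq> 0" using ts by simp
    show "t/(t-s) + (1/(t-s))*(-s) = 1" using ne by (simp add: divide_simps)
    show "t/(t-s) + (1/(t-s))*(-t) = 0" using ne by (simp add: divide_simps)
    show "t/(t-s) + (-1/(t-s))*t = 0" using ne by (simp add: divide_simps)
    show "t/(t-s) + (-1/(t-s))* s = 1" using ne by (simp add: divide_simps)
  qed
  have n1: "lam * integral {-t..-s} (\<lambda>x. w x * (t/(t-s) + (1/(t-s))*x)^2) \<ge> 0"
  proof (rule mult_nonneg_nonneg[OF lam0], rule wnn)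
    show "continuous_on {-t..-s} (\<lambda>x. t/(t-s) + (1/(t-s))*x)" by (intro continuous_intros)
  qed (use st in auto)
  have n3: "lam * integral {s..t} (\<lambda>x. w x * (t/(t-s) + (-1/(t-s))*x)^2) \<ge> 0"
  proof (rule mult_nonneg_nonneg[OF lam0], rule wnn)
    show "continuous_on {s..t} (\<lambda>x. t/(t-s) + (-1/(t-s))*x)" by (intro continuous_intros)
  qed (use st in auto)
  have "lam * integral {-s..s} w \<le> (1/(t-s))^2 * integral {-t..-s} w + (-1/(t-s))^2 * integral {s..t} w"
    using p1 p2 p3 n1 n3 unfolding e1 by simp
  also have "\<dots> = (integral {-t..-s} w + integral {s..t} w) / (t - s)^2"
    by (simp add: power_divide add_divide_distrib)
  finally show ?thesis .
qed

end

lemma cont_bound: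
  fixes f :: "real \<Rightarrow> real"
  assumes "continuous_on {\<alpha>..\<beta>} f"
  obtains B where "B \<ge> 0" "\<And>x. x \<in> {\<alpha>..\<beta>} \<Longrightarrow> \<bar>f x\<bar> \<le> B"
proof -
  have "compact (f ` {\<alpha>..\<beta>})" by (rule compact_continuous_image[OF assms]) simp
  then have "bounded (f ` {\<alpha>..\<beta>})" by (rule compact_imp_bounded)
  then obtain B where B: "\<And>y. y \<in> f ` {\<alpha>..\<beta>} \<Longrightarrow> norm y \<le> B" by (auto simp: bounded_iff)
  show ?thesis
  proof (rule that[of "max B 0"])
    show "\<bar>f x\<bar> \<le> max B 0" if "x \<in> {\<alpha>..\<beta>}" for x using B[of "f x"] that by auto
  qed simp
qed

lemma gronwall0:
  fixes D :: "real \<Rightarrow> real"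
  assumes cont: "continuous_on {\<alpha>..\<beta>} D" and K: "K \<ge> 0"
    and le: "\<And>x. x \<in> {\<alpha>..\<beta>} \<Longrightarrow> \<bar>D x\<bar> \<le> K * integral {\<alpha>..x} (\<lambda>y. \<bar>D y\<bar>)"
    and x: "x \<in> {\<alpha>..\<beta>}"
  shows "D x = 0"
proof -
  define E where "E x = integral {\<alpha>..x} (\<lambda>y. \<bar>D y\<bar>)" for x
  have ac: "continuous_on {\<alpha>..\<beta>} (\<lambda>y. \<bar>D y\<bar>)" by (intro continuous_intros cont)
  have Eder: "(E has_real_derivative \<bar>D y\<bar>) (at y within {\<alpha>..\<beta>})" if "y \<in> {\<alpha>..\<beta>}" for y
    unfolding E_def by (rule integral_has_real_derivative[OF ac that])
  have E0: "E y \<ge> 0" if "y \<in> {\<alpha>..\<beta>}" for y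
    unfolding E_def
    by (rule integral_nonneg) (use that in \<open>auto intro!: integrable_continuous_interval continuous_on_subset[OF ac]\<close>)
  define H where "H y = exp (- K * y) * E y" for y
  define H' where "H' y = exp (- K * y) * (\<bar>D y\<bar> - K * E y)" for y
  have Hder: "(H has_real_derivative H' y) (at y within {\<alpha>..x})" if y: "y \<in> {\<alpha>..x}" for y
  proof -
    have y': "y \<in> {\<alpha>..\<beta>}" using y x by auto
    have "(E has_real_derivative \<bar>D y\<bar>) (at y within {\<alpha>..x})"
      by (rule DERIV_subset[OF Eder[OF y']]) (use x in auto)
    then show ?thesis unfolding H_def H'_def
      by (auto intro!: derivative_eq_intros simp: algebra_simps)
  qed
  have "(H' has_integral (H x - H \<alpha>)) {\<alpha>..x}" by (rule ftc_within) (use x Hder in auto)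
  then have "H x - H \<alpha> \<le> 0"
  proof (rule has_integral_le[OF _ has_integral_0])
    fix y assume y: "y \<in> {\<alpha>..x}"
    then have "\<bar>D y\<bar> - K * E y \<le> 0" using le[of y] x by (auto simp: E_def)
    then show "H' y \<le> 0" unfolding H'_def by (simp add: mult_nonneg_nonpos)
  qed
  moreover have "H \<alpha> = 0" by (simp add: H_def E_def)
  moreover have "H x \<ge> 0" using E0[OF x] by (simp add: H_def)
  ultimately have "E x = 0" by (simp add: H_def)
  then show ?thesis using le[OF x] by (simp add: E_def)
qed

context eig begin

lemma M_bound_mult: "\<bar>p * a y * z\<bar> \<le> p * M * \<bar>z\<bar>"
  using a_bdd[of y] p_pos by (simp add: abs_mult mult_right_mono)

lemma Utilde_ftc:
  assumes Vder: "\<And>x. x \<in> {-l..l} \<Longrightarrow> (V has_real_derivative (- lam * w x * u x)) (at x within {-l..l})"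
    and ucont: "continuous_on {-l..l} u" and x: "x \<in> {-l..l}"
  shows "(\<lambda>y. p * a y * (V y * iw y) - lam * u y) integrable_on {-l..x}"
    "integral {-l..x} (\<lambda>y. p * a y * (V y * iw y) - lam * u y) = V x * iw x - V (-l) * iw (-l)"
proof -
  have Vcont: "continuous_on {-l..l} V"
    unfolding continuous_on_eq_continuous_within using Vder DERIV_continuous by blast
  obtain BV where BV: "BV \<ge> 0" "\<And>x. x \<in> {-l..l} \<Longrightarrow> \<bar>V x\<bar> \<le> BV" using cont_bound[OF Vcont] by blast
  obtain Bu where Bu: "Bu \<ge> 0" "\<And>x. x \<in> {-l..l} \<Longrightarrow> \<bar>u x\<bar> \<le> Bu" using cont_bound[OF ucont] by blast
  have Vlip: "(\<bar>lam\<bar> * Wmax * Bu)-lipschitz_on {-l..l} V"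
  proof (rule deriv_lip[OF Vder])
    fix y assume y: "y \<in> {-l..l}"
    have "\<bar>- lam * w y * u y\<bar> = \<bar>lam\<bar> * w y * \<bar>u y\<bar>" using w_pos[of y] by (simp add: abs_mult)
    also have "\<dots> \<le> \<bar>lam\<bar> * Wmax * Bu"
      by (intro mult_mono w_le y Bu(2)) (use w_pos[of y] Wmax_pos in \<open>auto intro: less_imp_le\<close>)
    finally show "\<bar>- lam * w y * u y\<bar> \<le> \<bar>lam\<bar> * Wmax * Bu" .
  qed (use Bu Wmax_pos in auto)
  have lip: "(BV * (Imax * (p * L)) + Imax * (\<bar>lam\<bar> * Wmax * Bu))-lipschitz_on {-l..l} (\<lambda>y. V y * iw y)"
    by (rule lip_mult[OF Vlip iw_lip BV(2)]) (use iw_le BV Imax_pos in \<open>auto intro: less_imp_le simp: abs_of_pos iw_pos\<close>)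
  have lipx: "(BV * (Imax * (p * L)) + Imax * (\<bar>lam\<bar> * Wmax * Bu))-lipschitz_on {-l..x} (\<lambda>y. V y * iw y)"
    by (rule lipschitz_on_subset[OF lip]) (use x in auto)
  have der: "((\<lambda>y. V y * iw y) has_real_derivative p * a y * (V y * iw y) - lam * u y) (at y)"
    if y: "y \<in> {-l<..<x}" "y \<notin> N" for y
  proof -
    have y': "y \<in> {-l<..<l}" using y x by auto
    have "(V has_real_derivative (- lam * w y * u y)) (at y within {-l..l})"
      using Vder y' by auto
    then have dV: "(V has_real_derivative (- lam * w y * u y)) (at y)"
      using at_within_Icc_at[of "-l" y l] y' by simp
    show ?thesis
      by (rule DERIV_cong[OF DERIV_mult[OF dV iw_der[OF y' y(2)]]])
         (simp add: algebra_simps iw_w[of y, unfolded mult.commute[of "w y"]] w_iw)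
  qed
  show "(\<lambda>y. p * a y * (V y * iw y) - lam * u y) integrable_on {-l..x}"
    "integral {-l..x} (\<lambda>y. p * a y * (V y * iw y) - lam * u y) = V x * iw x - V (-l) * iw (-l)"
    using lip_ftc[OF _ lipx Nneg der] x by auto
qed

lemma vsol_eigenpair:
  assumes s: "vsol lam u V" and bc: "u (-l) = 0" "u l = 0" and pos: "\<forall>x\<in>{-l<..<l}. u x > 0"
  shows "positive_eigenpair a l p lam u"
proof -
  define u' where "u' y = V y * iw y" for y
  define u'' where "u'' y = p * a y * u' y - lam * u y" for y
  have ucont: "continuous_on {-l..l} u" using vsol_cont[OF s] by simp
  note UF = Utilde_ftc[OF vsolD(2)[OF s] ucont]
  have d1: "\<forall>x\<in>{-l..l}. (u has_real_derivative u' x) (at x within {-l..l})"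
    using vsolD(1)[OF s] by (simp add: u'_def)
  have u''eq: "u'' = (\<lambda>y. p * a y * (V y * iw y) - lam * u y)" by (rule ext) (simp add: u''_def u'_def)
  have i2: "u'' integrable_on {-l..l}" using UF(1)[of l] l_pos unfolding u''eq by simp
  have u'cont: "continuous_on {-l..l} u'"
    unfolding u'_def using vsol_cont[OF s] iw_cont by (intro continuous_intros) auto
  have abs: "u'' absolutely_integrable_on {-l..l}"
  proof (rule absolutely_integrable_integrable_bound[OF _ i2])
    show "norm (u'' x) \<le> p * M * \<bar>u' x\<bar> + \<bar>lam\<bar> * \<bar>u x\<bar>" if "x \<in> {-l..l}" for x
    proof -
      have "\<bar>u'' x\<bar> \<le> \<bar>p * a x * u' x\<bar> + \<bar>lam * u x\<bar>" unfolding u''_def by (rule abs_triangle_ineq4)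
      then show ?thesis using M_bound_mult[of x "u' x"] by (simp add: abs_mult)
    qed
    show "(\<lambda>x. p * M * \<bar>u' x\<bar> + \<bar>lam\<bar> * \<bar>u x\<bar>) integrable_on {-l..l}"
      by (rule integrable_continuous_interval) (intro continuous_intros u'cont ucont)
  qed
  have d3: "\<forall>x\<in>{-l..l}. u' x = u' (-l) + integral {-l..x} u''"
    using UF(2) unfolding u''eq by (simp add: u'_def)
  have d4: "AE x in lborel. x \<in> {-l<..<l} \<longrightarrow> - u'' x + p * a x * u' x = lam * u x"
    by (simp add: u''_def)
  show ?thesis unfolding positive_eigenpair_def
    using d1 abs d3 d4 bc pos by blast
qed

end

context eig begin

lemma eigenpair_vsol:
  assumes ep: "positive_eigenpair a l p lam u"
  shows "\<exists>V. vsol lam u V"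
proof -
  from ep obtain u' u'' where
    d1: "\<forall>x\<in>{-l..l}. (u has_real_derivative u' x) (at x within {-l..l})" and
    d2: "u'' absolutely_integrable_on {-l..l}" and
    d3: "\<forall>x\<in>{-l..l}. u' x = u' (-l) + integral {-l..x} u''" and
    d4: "AE x in lborel. x \<in> {-l<..<l} \<longrightarrow> - u'' x + p * a x * u' x = lam * u x"
    unfolding positive_eigenpair_def by blast
  obtain N2 where N2: "negligible N2" and eqn: "\<And>x. x \<notin> N2 \<Longrightarrow> x \<in> {-l<..<l} \<longrightarrow> - u'' x + p * a x * u' x = lam * u x"
    using AE_lborel_negligible[OF d4] by blast
  have ucont: "continuous_on {-l..l} u"
    unfolding continuous_on_eq_continuous_within using d1 DERIV_continuous by blast
  have wucont: "continuous_on {-l..l} (\<lambda>t. w t * u t)" by (intro continuous_intros w_cont ucont)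
  define V where "V x = w (-l) * u' (-l) - lam * integral {-l..x} (\<lambda>t. w t * u t)" for x
  have Vder: "(V has_real_derivative (- lam * w x * u x)) (at x within {-l..l})" if x: "x \<in> {-l..l}" for x
    unfolding V_def
    by (rule DERIV_cong[OF DERIV_diff[OF DERIV_const DERIV_cmult[OF integral_has_real_derivative[OF wucont x]]]]) simp
  have UF1: "(\<lambda>y. p * a y * (V y * iw y) - lam * u y) integrable_on {-l..x}" if "x \<in> {-l..l}" for x
    by (rule Utilde_ftc(1)[of V lam u]) (use Vder ucont that in auto)
  have UF2: "integral {-l..x} (\<lambda>y. p * a y * (V y * iw y) - lam * u y) = V x * iw x - V (-l) * iw (-l)"
    if "x \<in> {-l..l}" for x
    by (rule Utilde_ftc(2)[of V lam u]) (use Vder ucont that in auto)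
  have u''int: "u'' integrable_on {-l..l}" using d2 by (simp add: absolutely_integrable_on_def)
  have u'cont: "continuous_on {-l..l} u'"
  proof -
    have "continuous_on {-l..l} (\<lambda>x. u' (-l) + integral {-l..x} u'')"
      by (intro continuous_intros indefinite_integral_continuous_1 u''int)
    then show ?thesis by (rule continuous_on_eq) (use d3 in metis)
  qed
  define D where "D y = u' y - V y * iw y" for y
  have Dcont: "continuous_on {-l..l} D"
  proof -
    have "continuous_on {-l..l} V"
      unfolding continuous_on_eq_continuous_within using Vder DERIV_continuous by blast
    then show ?thesis unfolding D_def by (intro continuous_intros u'cont iw_cont)
  qed
  have Deq: "D x = integral {-l..x} (\<lambda>y. p * a y * D y)" and Dint: "(\<lambda>y. p * a y * D y) integrable_on {-l..x}"
    if x: "x \<in> {-l..l}" for x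
  proof -
    define g1 where "g1 y = p * a y * u' y - lam * u y" for y
    have sub: "u'' integrable_on {-l..x}" by (rule integrable_on_subinterval[OF u''int]) (use x in auto)
    have spk: "u'' y = g1 y" if "y \<in> {-l..x} - (N2 \<union> {-l, x})" for y
      using eqn[of y] that x by (auto simp: g1_def)
    have g1i: "g1 integrable_on {-l..x}"
      by (rule integrable_spike[OF sub, of "N2 \<union> {-l, x}"]) (use N2 spk in auto)
    have g1e: "integral {-l..x} u'' = integral {-l..x} g1"
      by (rule integral_spike[of "N2 \<union> {-l, x}"]) (use N2 spk in auto)
    have g2i: "(\<lambda>y. p * a y * (V y * iw y) - lam * u y) integrable_on {-l..x}" by (rule UF1[OF x])
    have ext: "(\<lambda>y. p * a y * D y) = (\<lambda>y. g1 y - (p * a y * (V y * iw y) - lam * u y))"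
      by (rule ext) (simp add: D_def g1_def algebra_simps)
    show "(\<lambda>y. p * a y * D y) integrable_on {-l..x}"
      unfolding ext by (rule integrable_diff[OF g1i g2i])
    have V0: "V (-l) * iw (-l) = u' (-l)"
      by (simp add: V_def) (metis mult.assoc mult.commute mult.left_neutral w_iw)
    have "D x = (u' (-l) + integral {-l..x} g1) - (V (-l) * iw (-l) + integral {-l..x} (\<lambda>y. p * a y * (V y * iw y) - lam * u y))"
      using d3[rule_format, OF x] UF2[OF x] g1e by (simp add: D_def)
    also have "\<dots> = integral {-l..x} g1 - integral {-l..x} (\<lambda>y. p * a y * (V y * iw y) - lam * u y)"
      using V0 by simp
    also have "\<dots> = integral {-l..x} (\<lambda>y. p * a y * D y)"
      unfolding ext by (rule integral_diff[OF g1i g2i, symmetric])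
    finally show "D x = integral {-l..x} (\<lambda>y. p * a y * D y)" .
  qed
  have D0: "D x = 0" if x: "x \<in> {-l..l}" for x
  proof (rule gronwall0[OF Dcont _ _ x])
    show "0 \<le> p * M" using p_pos M_nonneg by simp
    fix y assume y: "y \<in> {-l..l}"
    have ac: "(\<lambda>y. p * M * \<bar>D y\<bar>) integrable_on {-l..y}"
      by (rule integrable_continuous_interval) (use y in \<open>intro continuous_intros continuous_on_subset[OF Dcont]; auto\<close>)
    have "\<bar>D y\<bar> = norm (integral {-l..y} (\<lambda>y. p * a y * D y))" using Deq[OF y] by simp
    also have "\<dots> \<le> integral {-l..y} (\<lambda>y. p * M * \<bar>D y\<bar>)"
      by (rule integral_norm_bound_integral[OF Dint[OF y] ac]) (simp add: M_bound_mult)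
    also have "\<dots> = p * M * integral {-l..y} (\<lambda>y. \<bar>D y\<bar>)" by simp
    finally show "\<bar>D y\<bar> \<le> p * M * integral {-l..y} (\<lambda>y. \<bar>D y\<bar>)" .
  qed
  have "vsol lam u V" unfolding vsol_def
  proof
    fix x assume x: "x \<in> {-l..l}"
    have "u' x = V x * iw x" using D0[OF x] by (simp add: D_def)
    then show "(u has_real_derivative V x * iw x) (at x within {-l..l}) \<and>
      (V has_real_derivative (- lam * w x * u x)) (at x within {-l..l})"
      using d1 x Vder[OF x] by (metis \<open>u' x = V x * iw x\<close>)
  qed
  then show ?thesis by blast
qed

end

context eig begin

definition phi0 where "phi0 x = integral {-l..x} iw"
definition Kop where "Kop f x = integral {-l..x} (\<lambda>s. iw s * integral {-l..s} (\<lambda>t. w t * f t))"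
definition phi where "phi n = (Kop ^^ n) phi0"

lemma phi_Suc: "phi (Suc n) = Kop (phi n)" by (simp add: phi_def)
lemma phi_0: "phi 0 = phi0" by (simp add: phi_def)

lemma inner_cont:
  assumes "continuous_on {-l..l} f"
  shows "continuous_on {-l..l} (\<lambda>s. integral {-l..s} (\<lambda>t. w t * f t))"
  by (intro indefinite_integral_continuous_1 integrable_continuous_interval continuous_intros w_cont assms)

lemma outer_cont:
  assumes "continuous_on {-l..l} f"
  shows "continuous_on {-l..l} (\<lambda>s. iw s * integral {-l..s} (\<lambda>t. w t * f t))"
  by (intro continuous_intros iw_cont inner_cont assms)

lemma Kop_cont:
  assumes "continuous_on {-l..l} f"
  shows "continuous_on {-l..l} (Kop f)"
  unfolding Kop_def
  by (intro indefinite_integral_continuous_1 integrable_continuous_interval outer_cont assms)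

lemma phi0_cont: "continuous_on {-l..l} phi0"
  unfolding phi0_def
  by (intro indefinite_integral_continuous_1 integrable_continuous_interval iw_cont)

lemma phi_cont: "continuous_on {-l..l} (phi n)"
  by (induction n) (simp_all add: phi_0 phi_Suc phi0_cont Kop_cont)

lemma poly_integral:
  assumes x: "x \<in> {-l..l}"
  shows "integral {-l..x} (\<lambda>t. C * (t + l)^k / fact k) = C * (x + l)^(Suc k) / fact (Suc k)"
proof -
  have "((\<lambda>t. C * (t + l)^k / fact k) has_integral
        (C * (x + l)^(Suc k) / fact (Suc k) - C * (-l + l)^(Suc k) / fact (Suc k))) {-l..x}"
  proof (rule ftc_within)
    fix t assume "t \<in> {-l..x}"
    have d: "((\<lambda>t. (t + l)^(Suc k)) has_real_derivative real (Suc k) * (t + l)^k) (at t within {-l..x})"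
    proof -
      have d0: "((\<lambda>t. t + l) has_real_derivative 1) (at t within {-l..x})"
        by (auto intro!: derivative_eq_intros)
      show ?thesis using DERIV_power[OF d0, of "Suc k"] by simp
    qed
    have "((\<lambda>t. C * (t + l)^(Suc k) / fact (Suc k)) has_real_derivative C * (real (Suc k) * (t + l)^k) / fact (Suc k)) (at t within {-l..x})"
      using DERIV_cdivide[OF DERIV_cmult[OF d, of C], of "fact (Suc k)"] by simp
    then show "((\<lambda>t. C * (t + l)^(Suc k) / fact (Suc k)) has_real_derivative C * (t + l)^k / fact k) (at t within {-l..x})"
      by (rule DERIV_cong) (simp add: fact_Suc)
  qed (use x in auto)
  then have "integral {-l..x} (\<lambda>t. C * (t + l)^k / fact k) =
        C * (x + l)^(Suc k) / fact (Suc k) - C * (-l + l)^(Suc k) / fact (Suc k)"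
    by (rule integral_unique)
  then show ?thesis by simp
qed

lemma int_bound:
  assumes g: "continuous_on {-l..l} g" and C: "C \<ge> 0"
    and le: "\<And>t. t \<in> {-l..l} \<Longrightarrow> \<bar>g t\<bar> \<le> C * (t + l)^k / fact k"
    and x: "x \<in> {-l..l}"
  shows "\<bar>integral {-l..x} g\<bar> \<le> C * (x + l)^(Suc k) / fact (Suc k)"
proof -
  have sub: "{-l..x} \<subseteq> {-l..l}" using x by auto
  have "norm (integral {-l..x} g) \<le> integral {-l..x} (\<lambda>t. C * (t + l)^k / fact k)"
  proof (rule integral_norm_bound_integral)
    show "g integrable_on {-l..x}" by (rule integrable_continuous_interval[OF continuous_on_subset[OF g sub]])
    show "(\<lambda>t. C * (t + l)^k / fact k) integrable_on {-l..x}"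
      by (rule integrable_continuous_interval, intro continuous_intros) auto
    show "norm (g t) \<le> C * (t + l)^k / fact k" if "t \<in> {-l..x}" for t using le[of t] that sub by auto
  qed
  then show ?thesis using poly_integral[OF x] by simp
qed

lemma Kop_bound:
  assumes f: "continuous_on {-l..l} f" and c: "c \<ge> 0"
    and le: "\<And>t. t \<in> {-l..l} \<Longrightarrow> \<bar>f t\<bar> \<le> c * (t + l)^k / fact k"
    and x: "x \<in> {-l..l}"
  shows "\<bar>Kop f x\<bar> \<le> (Imax * (Wmax * c)) * (x + l)^(Suc (Suc k)) / fact (Suc (Suc k))"
proof -
  have inner: "\<bar>integral {-l..s} (\<lambda>t. w t * f t)\<bar> \<le> (Wmax * c) * (s + l)^(Suc k) / fact (Suc k)"
    if s: "s \<in> {-l..l}" for s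
  proof (rule int_bound[OF _ _ _ s])
    show "continuous_on {-l..l} (\<lambda>t. w t * f t)" by (intro continuous_intros w_cont f)
    show "0 \<le> Wmax * c" using Wmax_pos c by simp
    fix t assume t: "t \<in> {-l..l}"
    have "\<bar>w t * f t\<bar> = w t * \<bar>f t\<bar>" using w_pos[of t] by (simp add: abs_mult)
    also have "\<dots> \<le> Wmax * (c * (t + l)^k / fact k)"
      by (rule mult_mono) (use w_le[OF t] le[OF t] Wmax_pos in auto)
    finally show "\<bar>w t * f t\<bar> \<le> Wmax * c * (t + l)^k / fact k" by simp
  qed
  show ?thesis unfolding Kop_def
  proof (rule int_bound[OF outer_cont[OF f] _ _ x])
    show "0 \<le> Imax * (Wmax * c)" using Imax_pos Wmax_pos c by simp
    fix t assume t: "t \<in> {-l..l}"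
    have "\<bar>iw t * integral {-l..t} (\<lambda>t. w t * f t)\<bar> = iw t * \<bar>integral {-l..t} (\<lambda>t. w t * f t)\<bar>"
      using iw_pos[of t] by (simp add: abs_mult)
    also have "\<dots> \<le> Imax * ((Wmax * c) * (t + l)^(Suc k) / fact (Suc k))"
      by (rule mult_mono) (use iw_le[OF t] inner[OF t] Imax_pos in auto)
    finally show "\<bar>iw t * integral {-l..t} (\<lambda>t. w t * f t)\<bar> \<le> Imax * (Wmax * c) * (t + l)^(Suc k) / fact (Suc k)"
      by simp
  qed
qed

lemma phi_bound:
  assumes x: "x \<in> {-l..l}"
  shows "\<bar>phi n x\<bar> \<le> Imax * (Imax * Wmax)^n * (x + l)^(2*n+1) / fact (2*n+1)"
  using x
proof (induction n arbitrary: x)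
  case 0
  have "\<bar>phi0 x\<bar> \<le> Imax * (x + l)^(Suc 0) / fact (Suc 0)"
    unfolding phi0_def
    by (rule int_bound[OF iw_cont _ _ 0(1), of Imax 0]) (use Imax_pos iw_le iw_pos in \<open>auto simp: abs_of_pos\<close>)
  then show ?case by (simp add: phi_0)
next
  case (Suc n)
  have "\<bar>Kop (phi n) x\<bar> \<le> (Imax * (Wmax * (Imax * (Imax * Wmax)^n))) * (x + l)^(Suc (Suc (2*n+1))) / fact (Suc (Suc (2*n+1)))"
  proof (rule Kop_bound[OF phi_cont _ _ Suc(2)])
    show "0 \<le> Imax * (Imax * Wmax)^n" using Imax_pos Wmax_pos by simp
    show "\<bar>phi n t\<bar> \<le> Imax * (Imax * Wmax)^n * (t + l)^(2*n+1) / fact (2*n+1)" if "t \<in> {-l..l}" for t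
      using Suc(1)[OF that] by simp
  qed
  moreover have "(Imax * (Wmax * (Imax * (Imax * Wmax)^n))) = Imax * (Imax * Wmax)^(Suc n)"
    by (simp add: algebra_simps)
  moreover have "Suc (Suc (2*n+1)) = 2 * Suc n + 1" by simp
  ultimately show ?case by (simp add: phi_Suc)
qed

definition Ms where "Ms \<Lambda> n = Imax * (2 * l) * (inverse (fact n) * (\<Lambda> * Imax * Wmax * (4 * l^2))^n)"

lemma Ms_summable: "summable (Ms \<Lambda>)"
  unfolding Ms_def by (intro summable_mult summable_exp)

lemma term_bound:
  assumes lam: "\<bar>lam\<bar> \<le> \<Lambda>" and x: "x \<in> {-l..l}"
  shows "norm ((-lam)^n * phi n x) \<le> Ms \<Lambda> n"
proof -
  have L0: "0 \<le> \<Lambda>" using lam by simp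
  have xl: "0 \<le> x + l" "x + l \<le> 2 * l" using x by auto
  have "norm ((-lam)^n * phi n x) = \<bar>lam\<bar>^n * \<bar>phi n x\<bar>" by (simp add: abs_mult power_abs)
  also have "\<dots> \<le> \<Lambda>^n * (Imax * (Imax * Wmax)^n * (x + l)^(2*n+1) / fact (2*n+1))"
    by (rule mult_mono) (use lam phi_bound[OF x] in \<open>auto intro: power_mono\<close>)
  also have "\<dots> \<le> \<Lambda>^n * (Imax * (Imax * Wmax)^n * (2 * l)^(2*n+1) / fact n)"
  proof (rule mult_left_mono)
    have f: "fact n \<le> (fact (2*n+1) :: real)" by (rule fact_mono) simp
    have "(x + l)^(2*n+1) \<le> (2 * l)^(2*n+1)" by (rule power_mono) (use xl in auto)
    then have "Imax * (Imax * Wmax)^n * (x + l)^(2*n+1) \<le> Imax * (Imax * Wmax)^n * (2 * l)^(2*n+1)"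
      by (rule mult_left_mono) (use Imax_pos Wmax_pos in simp)
    moreover have "0 \<le> Imax * (Imax * Wmax)^n * (2 * l)^(2*n+1)" using Imax_pos Wmax_pos l_pos by simp
    ultimately show "Imax * (Imax * Wmax)^n * (x + l)^(2*n+1) / fact (2*n+1)
        \<le> Imax * (Imax * Wmax)^n * (2 * l)^(2*n+1) / fact n"
      using f by (meson divide_left_mono fact_gt_zero frac_le order_trans less_imp_le fact_ge_zero
          divide_right_mono mult_pos_pos)
  qed (use L0 in simp)
  also have "\<dots> = Ms \<Lambda> n"
    by (simp add: Ms_def power_mult_distrib power_mult power2_eq_square field_simps
        power_mult_distrib[of 2 2 n, symmetric])
  finally show ?thesis .
qed

definition U where "U lam x = (\<Sum>n. (-lam)^n * phi n x)"

lemma U_summable: "x \<in> {-l..l} \<Longrightarrow> summable (\<lambda>n. (-lam)^n * phi n x)"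
  by (rule summable_comparison_test[OF _ Ms_summable[of "\<bar>lam\<bar>"]]) (use term_bound in auto)

lemma U_bound: "\<bar>lam\<bar> \<le> \<Lambda> \<Longrightarrow> x \<in> {-l..l} \<Longrightarrow> \<bar>U lam x\<bar> \<le> suminf (Ms \<Lambda>)"
  unfolding U_def using norm_suminf_le[OF term_bound Ms_summable] by simp

lemma U_joint_cont:
  "continuous_on ({-\<Lambda>..\<Lambda>} \<times> {-l..l}) (\<lambda>z. U (fst z) (snd z))"
proof -
  let ?A = "{-\<Lambda>..\<Lambda>} \<times> {-l..l}"
  have ul: "uniform_limit ?A (\<lambda>n z. \<Sum>i<n. (- fst z)^i * phi i (snd z)) (\<lambda>z. \<Sum>i. (- fst z)^i * phi i (snd z)) sequentially"
    by (rule Weierstrass_m_test[OF _ Ms_summable[of \<Lambda>]]) (clarsimp simp del: real_norm_def, rule term_bound, auto)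
  have c: "continuous_on ?A (\<lambda>z. \<Sum>i<n. (- fst z)^i * phi i (snd z))" for n
  proof (intro continuous_on_sum continuous_intros)
    fix i
    show "continuous_on ?A (\<lambda>z. phi i (snd z))"
      by (rule continuous_on_compose2[OF phi_cont[of i]]) (auto intro: continuous_intros)
  qed
  show ?thesis unfolding U_def
    by (rule uniform_limit_theorem[OF _ ul]) (use c in auto)
qed

lemma U_cont_x: "continuous_on {-l..l} (U lam)"
proof -
  have "continuous_on {-l..l} ((\<lambda>z. U (fst z) (snd z)) \<circ> (\<lambda>x. (lam, x)))"
    by (rule continuous_on_compose[OF _ continuous_on_subset[OF U_joint_cont[of "\<bar>lam\<bar>"]]])
       (auto intro!: continuous_intros)
  then show ?thesis by (simp add: o_def)
qed

lemma U_cont_lam: "x \<in> {-l..l} \<Longrightarrow> continuous_on {-\<Lambda>..\<Lambda>} (\<lambda>lam. U lam x)"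
proof -
  assume x: "x \<in> {-l..l}"
  have "continuous_on {-\<Lambda>..\<Lambda>} ((\<lambda>z. U (fst z) (snd z)) \<circ> (\<lambda>lam. (lam, x)))"
    by (rule continuous_on_compose[OF _ continuous_on_subset[OF U_joint_cont[of \<Lambda>]]])
       (use x in \<open>auto intro!: continuous_intros\<close>)
  then show ?thesis by (simp add: o_def)
qed

end

context eig begin

lemma Kop_lin:
  assumes f: "continuous_on {-l..l} f" and g: "continuous_on {-l..l} g" and x: "x \<in> {-l..l}"
  shows "Kop (\<lambda>t. f t + c * g t) x = Kop f x + c * Kop g x"
proof -
  have sub: "{-l..s} \<subseteq> {-l..l}" if "s \<in> {-l..x}" for s using that x by auto
  have eq: "iw s * integral {-l..s} (\<lambda>t. w t * (f t + c * g t)) =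
      iw s * integral {-l..s} (\<lambda>t. w t * f t) + c * (iw s * integral {-l..s} (\<lambda>t. w t * g t))"
    if s: "s \<in> {-l..x}" for s
  proof -
    have i1: "(\<lambda>t. w t * f t) integrable_on {-l..s}"
      by (rule integrable_continuous_interval, rule continuous_on_subset[OF _ sub[OF s]])
         (intro continuous_intros w_cont f)
    have i2: "(\<lambda>t. c * (w t * g t)) integrable_on {-l..s}"
      by (rule integrable_continuous_interval, rule continuous_on_subset[OF _ sub[OF s]])
         (intro continuous_intros w_cont g)
    have "integral {-l..s} (\<lambda>t. w t * (f t + c * g t)) = integral {-l..s} (\<lambda>t. w t * f t + c * (w t * g t))"
      by (simp add: algebra_simps)
    also have "\<dots> = integral {-l..s} (\<lambda>t. w t * f t) + c * integral {-l..s} (\<lambda>t. w t * g t)"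
      using integral_add[OF i1 i2] by simp
    finally show ?thesis by (simp add: algebra_simps)
  qed
  have o1: "(\<lambda>s. iw s * integral {-l..s} (\<lambda>t. w t * f t)) integrable_on {-l..x}"
    by (rule integrable_continuous_interval, rule continuous_on_subset[OF outer_cont[OF f]]) (use x in auto)
  have o2: "(\<lambda>s. c * (iw s * integral {-l..s} (\<lambda>t. w t * g t))) integrable_on {-l..x}"
    by (rule integrable_continuous_interval, rule continuous_on_subset[of "{-l..l}"],
        rule continuous_on_mult[OF continuous_on_const outer_cont[OF g]]) (use x in auto)
  have "Kop (\<lambda>t. f t + c * g t) x = integral {-l..x} (\<lambda>s. iw s * integral {-l..s} (\<lambda>t. w t * f t) +
         c * (iw s * integral {-l..s} (\<lambda>t. w t * g t)))"
    unfolding Kop_def by (rule integral_cong) (rule eq)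
  also have "\<dots> = Kop f x + c * Kop g x"
    unfolding Kop_def using integral_add[OF o1 o2] by simp
  finally show ?thesis .
qed

lemma Kop_partial:
  assumes x: "x \<in> {-l..l}"
  shows "Kop (\<lambda>t. \<Sum>n<k. (-lam)^n * phi n t) x = (\<Sum>n<k. (-lam)^n * phi (Suc n) x)"
proof (induction k)
  case 0
  then show ?case by (simp add: Kop_def)
next
  case (Suc k)
  have c: "continuous_on {-l..l} (\<lambda>t. \<Sum>n<k. (-lam)^n * phi n t)"
    by (intro continuous_on_sum continuous_intros phi_cont)
  have "Kop (\<lambda>t. \<Sum>n<Suc k. (-lam)^n * phi n t) x = Kop (\<lambda>t. (\<Sum>n<k. (-lam)^n * phi n t) + (-lam)^k * phi k t) x"
    by simp
  also have "\<dots> = Kop (\<lambda>t. \<Sum>n<k. (-lam)^n * phi n t) x + (-lam)^k * Kop (phi k) x"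
    by (rule Kop_lin[OF c phi_cont x])
  finally show ?case using Suc by (simp add: phi_Suc)
qed

lemma Kop_lim:
  assumes fc: "\<And>k. continuous_on {-l..l} (f k)" and B: "B \<ge> 0"
    and fb: "\<And>k t. t \<in> {-l..l} \<Longrightarrow> \<bar>f k t\<bar> \<le> B"
    and conv: "\<And>t. t \<in> {-l..l} \<Longrightarrow> (\<lambda>k. f k t) \<longlonglongrightarrow> F t"
    and x: "x \<in> {-l..l}"
  shows "(\<lambda>k. Kop (f k) x) \<longlonglongrightarrow> Kop F x"
proof -
  have inner: "(\<lambda>k. integral {-l..s} (\<lambda>t. w t * f k t)) \<longlonglongrightarrow> integral {-l..s} (\<lambda>t. w t * F t)"
    if s: "s \<in> {-l..l}" for s
  proof (rule dominated_convergence(2)[where h="\<lambda>_. Wmax * B"])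
    have sub: "{-l..s} \<subseteq> {-l..l}" using s by auto
    show "(\<lambda>t. w t * f k t) integrable_on {-l..s}" for k
      by (rule integrable_continuous_interval, rule continuous_on_subset[OF _ sub]) (intro continuous_intros w_cont fc)
    show "(\<lambda>_. Wmax * B) integrable_on {-l..s}"
      by (rule integrable_continuous_interval) (rule continuous_on_const)
    show "norm (w t * f k t) \<le> Wmax * B" if "t \<in> {-l..s}" for k t
    proof -
      have t: "t \<in> {-l..l}" using that sub by auto
      have "\<bar>w t * f k t\<bar> = w t * \<bar>f k t\<bar>" using w_pos[of t] by (simp add: abs_mult)
      also have "\<dots> \<le> Wmax * B" by (rule mult_mono) (use w_le[OF t] fb[OF t] Wmax_pos in auto)
      finally show ?thesis by simp
    qed
    show "(\<lambda>k. w t * f k t) \<longlonglongrightarrow> w t * F t" if "t \<in> {-l..s}" for t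
      using that sub by (intro tendsto_mult_left conv) auto
  qed
  show ?thesis unfolding Kop_def
  proof (rule dominated_convergence(2)[where h="\<lambda>_. Imax * (Wmax * B * (2 * l))"])
    have sub: "{-l..x} \<subseteq> {-l..l}" using x by auto
    show "(\<lambda>s. iw s * integral {-l..s} (\<lambda>t. w t * f k t)) integrable_on {-l..x}" for k
      by (rule integrable_continuous_interval, rule continuous_on_subset[OF outer_cont[OF fc] sub])
    show "(\<lambda>_. Imax * (Wmax * B * (2 * l))) integrable_on {-l..x}"
      by (rule integrable_continuous_interval) (rule continuous_on_const)
    show "norm (iw s * integral {-l..s} (\<lambda>t. w t * f k t)) \<le> Imax * (Wmax * B * (2 * l))"
      if "s \<in> {-l..x}" for k s
    proof -
      have s: "s \<in> {-l..l}" using that sub by auto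
      have "norm (integral {-l..s} (\<lambda>t. w t * f k t)) \<le> Wmax * B * (s - - l)"
      proof (rule integral_bound)
        show "continuous_on {-l..s} (\<lambda>t. w t * f k t)"
          by (rule continuous_on_subset[of "{-l..l}"]) (use s in \<open>intro continuous_intros w_cont fc, auto\<close>)
        fix t assume "t \<in> {-l..s}"
        then have t: "t \<in> {-l..l}" using s by auto
        have "\<bar>w t * f k t\<bar> = w t * \<bar>f k t\<bar>" using w_pos[of t] by (simp add: abs_mult)
        also have "\<dots> \<le> Wmax * B" by (rule mult_mono) (use w_le[OF t] fb[OF t] Wmax_pos in auto)
        finally show "norm (w t * f k t) \<le> Wmax * B" by simp
      qed (use s in auto)
      also have "\<dots> \<le> Wmax * B * (2 * l)"
        by (rule mult_left_mono) (use s Wmax_pos B in auto)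
      finally have ib: "\<bar>integral {-l..s} (\<lambda>t. w t * f k t)\<bar> \<le> Wmax * B * (2 * l)" by simp
      have "iw s * \<bar>integral {-l..s} (\<lambda>t. w t * f k t)\<bar> \<le> Imax * (Wmax * B * (2 * l))"
        by (rule mult_mono) (use iw_le[OF s] iw_pos[of s] ib Imax_pos in auto)
      then show ?thesis using iw_pos[of s] by (simp add: abs_mult)
    qed
    show "(\<lambda>k. iw s * integral {-l..s} (\<lambda>t. w t * f k t)) \<longlonglongrightarrow> iw s * integral {-l..s} (\<lambda>t. w t * F t)"
      if "s \<in> {-l..x}" for s
      using that sub by (intro tendsto_mult_left inner) auto
  qed
qed

lemma U_eq:
  assumes x: "x \<in> {-l..l}"
  shows "U lam x = phi0 x - lam * Kop (U lam) x"
proof -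
  define f where "f k t = (\<Sum>n<k. (-lam)^n * phi n t)" for k t
  define B where "B = suminf (Ms \<bar>lam\<bar>)"
  have Ms0: "Ms \<Lambda> n \<ge> 0" if "\<Lambda> \<ge> 0" for \<Lambda> n
    using Imax_pos Wmax_pos l_pos that unfolding Ms_def by simp
  have B0: "B \<ge> 0" unfolding B_def using Ms0 by (intro suminf_nonneg Ms_summable) auto
  have fb: "\<bar>f k t\<bar> \<le> B" if t: "t \<in> {-l..l}" for k t
  proof -
    have "\<bar>f k t\<bar> \<le> (\<Sum>n<k. norm ((-lam)^n * phi n t))" unfolding f_def
      by (metis real_norm_def norm_sum)
    also have "\<dots> \<le> (\<Sum>n<k. Ms \<bar>lam\<bar> n)" by (intro sum_mono term_bound t) simp
    also have "\<dots> \<le> B" unfolding B_def by (rule sum_le_suminf[OF Ms_summable]) (use Ms0 in auto)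
    finally show ?thesis .
  qed
  have conv: "(\<lambda>k. f k t) \<longlonglongrightarrow> U lam t" if "t \<in> {-l..l}" for t
    unfolding f_def U_def by (rule summable_LIMSEQ[OF U_summable[OF that]])
  have fc: "continuous_on {-l..l} (f k)" for k
    unfolding f_def by (intro continuous_on_sum continuous_intros phi_cont)
  have "(\<lambda>k. Kop (f k) x) \<longlonglongrightarrow> Kop (U lam) x" by (rule Kop_lim[OF fc B0 fb conv x])
  then have "(\<lambda>k. \<Sum>n<k. (-lam)^n * phi (Suc n) x) \<longlonglongrightarrow> Kop (U lam) x"
    unfolding f_def using Kop_partial[OF x] by simp
  then have "(\<lambda>n. (-lam)^n * phi (Suc n) x) sums Kop (U lam) x" by (simp add: sums_def)
  then have "(\<lambda>n. (-lam) * ((-lam)^n * phi (Suc n) x)) sums ((-lam) * Kop (U lam) x)" by (rule sums_mult)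
  then have "(\<lambda>n. (-lam)^(Suc n) * phi (Suc n) x) sums ((-lam) * Kop (U lam) x)" by (simp add: mult.assoc)
  then have "(\<lambda>n. (-lam)^n * phi n x) sums ((-lam) * Kop (U lam) x + (-lam)^0 * phi 0 x)"
    by (subst (asm) sums_Suc_iff)
  then show ?thesis unfolding U_def by (simp add: sums_iff phi_0)
qed

definition Vs where "Vs lam x = 1 - lam * integral {-l..x} (\<lambda>t. w t * U lam t)"

lemma Vs_cont: "continuous_on {-l..l} (Vs lam)"
  unfolding Vs_def by (intro continuous_intros inner_cont U_cont_x)

lemma U_int: "x \<in> {-l..l} \<Longrightarrow> U lam x = integral {-l..x} (\<lambda>s. iw s * Vs lam s)"
proof -
  assume x: "x \<in> {-l..l}"
  have sub: "{-l..x} \<subseteq> {-l..l}" using x by auto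
  have i1: "iw integrable_on {-l..x}"
    by (rule integrable_continuous_interval, rule continuous_on_subset[OF iw_cont sub])
  have i2: "(\<lambda>s. lam * (iw s * integral {-l..s} (\<lambda>t. w t * U lam t))) integrable_on {-l..x}"
    by (rule integrable_continuous_interval, rule continuous_on_subset[OF _ sub])
       (intro continuous_intros outer_cont U_cont_x)
  have "U lam x = integral {-l..x} iw - integral {-l..x} (\<lambda>s. lam * (iw s * integral {-l..s} (\<lambda>t. w t * U lam t)))"
    using U_eq[OF x] by (simp add: phi0_def Kop_def)
  also have "\<dots> = integral {-l..x} (\<lambda>s. iw s - lam * (iw s * integral {-l..s} (\<lambda>t. w t * U lam t)))"
    by (rule integral_diff[OF i1 i2, symmetric])
  also have "\<dots> = integral {-l..x} (\<lambda>s. iw s * Vs lam s)"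
    by (simp add: Vs_def algebra_simps)
  finally show ?thesis .
qed

lemma U_left: "U lam (-l) = 0"
  using U_eq[of "-l" lam] l_pos by (simp add: phi0_def Kop_def)

lemma U_vsol: "vsol lam (U lam) (Vs lam)"
  unfolding vsol_def
proof
  fix x assume x: "x \<in> {-l..l}"
  have c: "continuous_on {-l..l} (\<lambda>s. iw s * Vs lam s)" by (intro continuous_intros iw_cont Vs_cont)
  have "((\<lambda>x. integral {-l..x} (\<lambda>s. iw s * Vs lam s)) has_real_derivative iw x * Vs lam x) (at x within {-l..l})"
    by (rule integral_has_real_derivative[OF c x])
  then have "(U lam has_real_derivative iw x * Vs lam x) (at x within {-l..l})"
    by (rule has_field_derivative_transform_within[OF _ zero_less_one x]) (simp add: U_int)
  moreover have "(Vs lam has_real_derivative - lam * w x * U lam x) (at x within {-l..l})"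
  proof -
    have wuc: "continuous_on {-l..l} (\<lambda>t. w t * U lam t)" by (intro continuous_intros w_cont U_cont_x)
    show ?thesis unfolding Vs_def
      by (rule DERIV_cong[OF DERIV_diff[OF DERIV_const DERIV_cmult[OF integral_has_real_derivative[OF wuc x]]]]) simp
  qed
  ultimately show "(U lam has_real_derivative Vs lam x * iw x) (at x within {-l..l}) \<and>
      (Vs lam has_real_derivative - lam * w x * U lam x) (at x within {-l..l})"
    by (simp add: mult.commute)
qed

end

context eig begin

lemma exists_eig:
  "\<exists>lam u V. vsol lam u V \<and> u (-l) = 0 \<and> u l = 0 \<and> (\<forall>x\<in>{-l<..<l}. u x > 0) \<and> lam \<ge> 0"
proof -
  define s0 where "s0 = l / 3"
  define t0 where "t0 = 2 * l / 3"
  have st: "0 < s0" "s0 < t0" "t0 < l" using l_pos by (auto simp: s0_def t0_def)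
  define Is where "Is = integral {-s0..s0} w"
  have Is_pos: "Is > 0" unfolding Is_def
    by (rule integral_pos[of _ _ _ 0], rule continuous_on_subset[OF w_cont])
       (use st w_pos in \<open>auto intro: less_imp_le\<close>)
  define R where "R = (integral {-t0..-s0} w + integral {s0..t0} w) / (t0 - s0)^2 / Is"
  define \<Lambda> where "\<Lambda> = max R 0 + 1"
  have \<Lambda>pos: "\<Lambda> > 0" and \<Lambda>R: "\<Lambda> > R" by (auto simp: \<Lambda>_def)
  define SB where "SB = suminf (Ms \<Lambda>)"
  have SB: "\<bar>U lam x\<bar> \<le> SB" if "lam \<in> {0..\<Lambda>}" "x \<in> {-l..l}" for lam x
    unfolding SB_def by (rule U_bound) (use that in auto)
  have SB0: "SB \<ge> 0" using SB[of 0 0] \<Lambda>pos l_pos by force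
  define \<delta> where "\<delta> = min l (1 / (2 * (\<Lambda> * Wmax * SB + 1)))"
  have K0: "\<Lambda> * Wmax * SB \<ge> 0" using \<Lambda>pos Wmax_pos SB0 by simp
  have \<delta>: "0 < \<delta>" "\<delta> \<le> l" "\<Lambda> * Wmax * SB * \<delta> \<le> 1 / 2"
  proof -
    show "0 < \<delta>" "\<delta> \<le> l" using l_pos K0 by (auto simp: \<delta>_def)
    have "\<delta> \<le> 1 / (2 * (\<Lambda> * Wmax * SB + 1))" by (simp add: \<delta>_def)
    then have "\<Lambda> * Wmax * SB * \<delta> \<le> \<Lambda> * Wmax * SB * (1 / (2 * (\<Lambda> * Wmax * SB + 1)))"
      using K0 by (rule mult_left_mono)
    also have "\<dots> \<le> 1 / 2" using K0 by (simp add: field_simps)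
    finally show "\<Lambda> * Wmax * SB * \<delta> \<le> 1 / 2" .
  qed
  have pos_near: "U lam x > 0" if lam: "lam \<in> {0..\<Lambda>}" and x: "-l < x" "x \<le> -l + \<delta>" for lam x
  proof -
    have xl: "x \<in> {-l..l}" using x \<delta> l_pos by auto
    have V2: "Vs lam s \<ge> 1 / 2" if s: "s \<in> {-l..x}" for s
    proof -
      have s': "s \<in> {-l..l}" using s xl by auto
      have "norm (integral {-l..s} (\<lambda>t. w t * U lam t)) \<le> (Wmax * SB) * (s - - l)"
      proof (rule integral_bound)
        show "continuous_on {-l..s} (\<lambda>t. w t * U lam t)"
          by (rule continuous_on_subset[of "{-l..l}"]) (use s' in \<open>intro continuous_intros w_cont U_cont_x, auto\<close>)
        fix t assume "t \<in> {-l..s}"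
        then have t: "t \<in> {-l..l}" using s' by auto
        have "\<bar>w t * U lam t\<bar> = w t * \<bar>U lam t\<bar>" using w_pos[of t] by (simp add: abs_mult)
        also have "\<dots> \<le> Wmax * SB" by (rule mult_mono) (use w_le[OF t] SB[OF lam t] Wmax_pos in auto)
        finally show "norm (w t * U lam t) \<le> Wmax * SB" by simp
      qed (use s in auto)
      also have "\<dots> \<le> (Wmax * SB) * \<delta>"
        by (rule mult_left_mono) (use s x Wmax_pos SB0 in auto)
      finally have ib: "\<bar>integral {-l..s} (\<lambda>t. w t * U lam t)\<bar> \<le> Wmax * SB * \<delta>" by simp
      have "\<bar>lam * integral {-l..s} (\<lambda>t. w t * U lam t)\<bar> \<le> \<Lambda> * (Wmax * SB * \<delta>)"
        unfolding abs_mult by (rule mult_mono) (use lam ib in auto)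
      then show ?thesis using \<delta>(3) unfolding Vs_def by (simp add: mult.assoc)
    qed
    have "U lam x = integral {-l..x} (\<lambda>s. iw s * Vs lam s)" by (rule U_int[OF xl])
    also have "\<dots> > 0"
    proof (rule integral_pos[of _ _ _ x])
      show "continuous_on {-l..x} (\<lambda>s. iw s * Vs lam s)"
        by (rule continuous_on_subset[of "{-l..l}"]) (use xl in \<open>intro continuous_intros iw_cont Vs_cont, auto\<close>)
      show "0 \<le> iw s * Vs lam s" if "s \<in> {-l..x}" for s
        using V2[OF that] iw_pos[of s] by simp
      show "0 < iw x * Vs lam x" using V2[of x] x iw_pos[of x] by simp
    qed (use x in auto)
    finally show ?thesis .
  qed
  define S where "S = {0..\<Lambda>} \<times> {-l+\<delta>..l}"
  define C where "C = {z \<in> S. U (fst z) (snd z) \<le> 0}"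
  define Z where "Z = fst ` C"
  have Scont: "continuous_on S (\<lambda>z. U (fst z) (snd z))"
    by (rule continuous_on_subset[OF U_joint_cont[of \<Lambda>]]) (use \<delta> in \<open>auto simp: S_def\<close>)
  have Ccl: "closed C" unfolding C_def
    using continuous_on_closed_Collect_le[OF Scont continuous_on_const, of 0] by (simp add: S_def closed_Times)
  have Ccomp: "compact C"
  proof -
    have "compact (S \<inter> C)" by (rule compact_Int_closed[OF _ Ccl]) (simp add: S_def compact_Times)
    moreover have "S \<inter> C = C" by (auto simp: C_def)
    ultimately show ?thesis by simp
  qed
  have Zcomp: "compact Z" unfolding Z_def
    by (rule compact_continuous_image[OF _ Ccomp]) (intro continuous_intros)
  have ZS: "Z \<subseteq> {0..\<Lambda>}" by (auto simp: Z_def C_def S_def)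
  have \<Lambda>Z: "\<Lambda> \<in> Z"
  proof -
    have "\<exists>x\<in>{-t0..t0}. U \<Lambda> x \<le> 0"
    proof (rule ccontr)
      assume "\<not> ?thesis"
      then have "\<forall>x\<in>{-t0..t0}. U \<Lambda> x > 0" by auto
      from trapezoid[OF U_vsol st this] \<Lambda>pos
      have "\<Lambda> * Is \<le> (integral {-t0..-s0} w + integral {s0..t0} w) / (t0 - s0)^2"
        by (simp add: Is_def)
      then have "\<Lambda> \<le> R" unfolding R_def
        by (subst pos_le_divide_eq[OF Is_pos]) simp
      then show False using \<Lambda>R by simp
    qed
    then obtain x where x: "x \<in> {-t0..t0}" "U \<Lambda> x \<le> 0" by blast
    have "\<not> x \<le> -l + \<delta>" using pos_near[of \<Lambda> x] x st \<Lambda>pos by auto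
    then have "(\<Lambda>, x) \<in> C" using x st \<Lambda>pos by (auto simp: C_def S_def)
    then show ?thesis unfolding Z_def by force
  qed
  have bdd: "bdd_below Z" using ZS by (meson bdd_below_Icc bdd_below_mono)
  define lam0 where "lam0 = Inf Z"
  have lam0Z: "lam0 \<in> Z" unfolding lam0_def
    by (rule closed_contains_Inf[OF _ bdd compact_imp_closed[OF Zcomp]]) (use \<Lambda>Z in auto)
  then obtain x1 where x1: "x1 \<in> {-l+\<delta>..l}" "U lam0 x1 \<le> 0" and lam0S: "lam0 \<in> {0..\<Lambda>}"
    by (auto simp: Z_def C_def S_def)
  have below: "U lam x > 0" if lam: "lam \<in> {0..\<Lambda>}" "lam < lam0" and x: "x \<in> {-l<..l}" for lam x
  proof (cases "x \<le> -l + \<delta>")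
    case True then show ?thesis using pos_near[OF lam(1)] x by auto
  next
    case False
    show ?thesis
    proof (rule ccontr)
      assume "\<not> ?thesis"
      then have "(lam, x) \<in> C" using lam x False by (auto simp: C_def S_def)
      then have "lam \<in> Z" unfolding Z_def by force
      then have "lam0 \<le> lam" unfolding lam0_def by (rule cInf_lower[OF _ bdd])
      then show False using lam by simp
    qed
  qed
  have x1l: "-l < x1" using x1 \<delta> by auto
  have lam0pos: "lam0 > 0"
  proof (rule ccontr)
    assume "\<not> ?thesis"
    then have "lam0 = 0" using lam0S by auto
    then have "U lam0 x1 = phi0 x1" using U_eq[of x1 lam0] x1 l_pos \<delta> by auto
    also have "phi0 x1 > 0" unfolding phi0_def
      by (rule integral_pos[of _ _ _ x1], rule continuous_on_subset[OF iw_cont])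
         (use x1 x1l iw_pos in \<open>auto intro: less_imp_le\<close>)
    finally show False using x1 by simp
  qed
  have nonneg: "U lam0 x \<ge> 0" if x: "x \<in> {-l<..l}" for x
  proof (rule ccontr)
    assume neg: "\<not> ?thesis"
    have xl: "x \<in> {-l..l}" using x by auto
    have "continuous_on {-\<Lambda>..\<Lambda>} (\<lambda>lam. U lam x)" by (rule U_cont_lam[OF xl])
    then have ci: "\<forall>e>0. \<exists>d>0. \<forall>x'\<in>{-\<Lambda>..\<Lambda>}. dist x' lam0 < d \<longrightarrow> dist (U x' x) (U lam0 x) < e"
      unfolding continuous_on_iff using lam0S by auto
    have "- U lam0 x > 0" using neg by simp
    with ci obtain d where d: "d > 0" "\<And>lam'. lam' \<in> {-\<Lambda>..\<Lambda>} \<Longrightarrow> dist lam' lam0 < d \<Longrightarrow>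
        dist (U lam' x) (U lam0 x) < - U lam0 x"
      by blast
    define lam' where "lam' = max 0 (lam0 - d / 2)"
    have l1: "lam' \<in> {0..\<Lambda>}" "lam' < lam0" using lam0S lam0pos d by (auto simp: lam'_def)
    have "dist (U lam' x) (U lam0 x) < - U lam0 x"
      by (rule d(2)) (use l1 d lam0pos in \<open>auto simp: lam'_def dist_real_def\<close>)
    then have "U lam' x < 0" by (simp add: dist_real_def)
    moreover have "U lam' x > 0" by (rule below[OF l1 x])
    ultimately show False by simp
  qed
  define u where "u = U lam0"
  define V where "V = Vs lam0"
  have s: "vsol lam0 u V" unfolding u_def V_def by (rule U_vsol)
  have nn: "u x \<ge> 0" if "x \<in> {-l..l}" for x
  proof (cases "x = -l")
    case True then show ?thesis by (simp add: u_def U_left)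
  next
    case False then show ?thesis using nonneg[of x] that by (auto simp: u_def)
  qed
  have nozero: False if x0: "x0 \<in> {-l<..<l}" "u x0 = 0" for x0
  proof -
    have x0': "x0 \<in> {-l..l}" using x0 by auto
    have "(u has_real_derivative V x0 * iw x0) (at x0)"
      using vsolD(1)[OF s x0'] at_within_Icc_at[of "-l" x0 l] x0 by simp
    then have "V x0 * iw x0 = 0"
    proof (rule DERIV_local_min)
      show "0 < min (x0 + l) (l - x0)" using x0 by auto
      show "\<forall>y. \<bar>x0 - y\<bar> < min (x0 + l) (l - x0) \<longrightarrow> u x0 \<le> u y"
      proof (intro allI impI)
        fix y assume "\<bar>x0 - y\<bar> < min (x0 + l) (l - x0)"
        then have "y \<in> {-l..l}" by (auto simp: abs_less_iff)
        then show "u x0 \<le> u y" using nn x0 by simp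
      qed
    qed
    then have V0: "V x0 = 0" using iw_pos[of x0] by simp
    define mm where "mm = min \<delta> (x0 + l)"
    have m: "mm \<le> x0 + l" "mm \<le> \<delta>" "mm > 0" using x0 \<delta> by (auto simp: mm_def)
    define y1 where "y1 = -l + mm / 2"
    have y1: "-l < y1" "y1 < x0" "y1 \<le> -l + \<delta>"
    proof -
      show "-l < y1" unfolding y1_def using m(3) by linarith
      show "y1 < x0" unfolding y1_def using m(1,3) by linarith
      show "y1 \<le> -l + \<delta>" unfolding y1_def using m(2,3) by linarith
    qed
    have uy1: "u y1 > 0" unfolding u_def by (rule pos_near[OF lam0S y1(1,3)])
    have sub: "{y1..x0} \<subseteq> {-l..l}" using y1 x0 by auto
    have Vnn: "V y \<ge> 0" if y: "y \<in> {y1..x0}" for y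
    proof -
      have sub2: "{y..x0} \<subseteq> {-l..l}" using y sub by auto
      have "((\<lambda>t. - lam0 * w t * u t) has_integral (V x0 - V y)) {y..x0}"
      proof (rule ftc_within)
        fix t assume "t \<in> {y..x0}"
        then have t': "t \<in> {-l..l}" using sub2 by auto
        show "(V has_real_derivative - lam0 * w t * u t) (at t within {y..x0})"
          by (rule DERIV_subset[OF vsolD(2)[OF s t'] sub2])
      qed (use y in auto)
      then have "V x0 - V y \<le> 0"
      proof (rule has_integral_le[OF _ has_integral_0])
        fix t assume "t \<in> {y..x0}"
        then have "u t \<ge> 0" "w t > 0" using nn sub2 w_pos by auto
        then show "- lam0 * w t * u t \<le> 0" using lam0pos by (simp add: mult_nonneg_nonneg)
      qed
      then show ?thesis using V0 by simp
    qed
    have "((\<lambda>t. V t * iw t) has_integral (u x0 - u y1)) {y1..x0}"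
    proof (rule ftc_within)
      fix t assume "t \<in> {y1..x0}"
      then have t': "t \<in> {-l..l}" using sub by auto
      show "(u has_real_derivative V t * iw t) (at t within {y1..x0})"
        by (rule DERIV_subset[OF vsolD(1)[OF s t'] sub])
    qed (use y1 in auto)
    then have "0 \<le> u x0 - u y1"
    proof (rule has_integral_le[OF has_integral_0])
      fix t assume "t \<in> {y1..x0}"
      then show "0 \<le> V t * iw t" using Vnn iw_pos[of t] by simp
    qed
    then show False using uy1 x0 by simp
  qed
  have x1eq: "x1 = l"
  proof (rule ccontr)
    assume "x1 \<noteq> l"
    then have "x1 \<in> {-l<..<l}" using x1 x1l by auto
    moreover have "u x1 = 0" using x1 nonneg[of x1] x1l by (auto simp: u_def)
    ultimately show False using nozero by blast
  qed
  have ul: "u l = 0" using x1 nonneg[of l] l_pos x1eq by (auto simp: u_def)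
  have upos: "\<forall>x\<in>{-l<..<l}. u x > 0"
  proof
    fix x assume x: "x \<in> {-l<..<l}"
    then have "u x \<ge> 0" using nn by auto
    moreover have "u x \<noteq> 0" using nozero x by blast
    ultimately show "u x > 0" by simp
  qed
  show ?thesis using s ul upos lam0pos U_left[of lam0]
    by (intro exI[of _ lam0] exI[of _ u] exI[of _ V]) (auto simp: u_def)
qed

end

lemma alg2:
  fixes D E1 E2 d :: real
  assumes "D > 0" "E1 > 0" "d > 0"
  shows "(E2 * D + E2 * D) / D^2 / (E1 * (2 * d)) = (E2 / E1) / (D * d)"
  using assms by (simp add: field_simps power2_eq_square)

context eig begin

lemma principal_char:
  obtains u V where "vsol (principal_eigenvalue a l p) u V" "u (-l) = 0" "u l = 0"
    "\<forall>x\<in>{-l<..<l}. u x > 0" "principal_eigenvalue a l p \<ge> 0"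
proof -
  obtain lam u V where s: "vsol lam u V" and bc: "u (-l) = 0" "u l = 0"
    and pos: "\<forall>x\<in>{-l<..<l}. u x > 0" and lam0: "lam \<ge> 0"
    using exists_eig by blast
  have "principal_eigenvalue a l p = lam" unfolding principal_eigenvalue_def
  proof (rule the_equality)
    show "\<exists>u. positive_eigenpair a l p lam u" using vsol_eigenpair[OF s bc pos] by blast
    fix lam' assume "\<exists>u. positive_eigenpair a l p lam' u"
    then obtain u' where ep: "positive_eigenpair a l p lam' u'" by blast
    then obtain V' where s': "vsol lam' u' V'" using eigenpair_vsol by blast
    from ep have bc': "u' (-l) = 0" "u' l = 0" "\<forall>x\<in>{-l<..<l}. u' x > 0"
      unfolding positive_eigenpair_def by auto
    show "lam' = lam" by (rule vsol_unique[OF s' s bc'(1) bc'(2) bc(1) bc(2) bc'(3) pos])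
  qed
  then show ?thesis using that s bc pos lam0 by simp
qed

lemma principal_lower: "principal_eigenvalue a l p \<ge> exp (- p * (bmax - bmin)) / (4 * l^2)"
proof -
  obtain u V where s: "vsol (principal_eigenvalue a l p) u V" "u (-l) = 0" "u l = 0"
    "\<forall>x\<in>{-l<..<l}. u x > 0" "principal_eigenvalue a l p \<ge> 0"
    by (rule principal_char)
  have "principal_eigenvalue a l p \<ge> 1 / (4 * l^2 * Imax * Wmax)" by (rule vsol_lower[OF s])
  moreover have "1 / (4 * l^2 * Imax * Wmax) = exp (- p * (bmax - bmin)) / (4 * l^2)"
    by (simp add: Imax_def Wmax_def exp_minus exp_diff field_simps)
  ultimately show ?thesis by simp
qed

lemma principal_upper:
  assumes st: "0 < s" "s < t" "t < l" and d: "0 < \<delta>" "{x1 - \<delta>..x1 + \<delta>} \<subseteq> {-s..s}"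
    and hi: "\<And>x. x \<in> {s..t} \<union> {-t..-s} \<Longrightarrow> b x \<ge> B2"
    and lo: "\<And>x. x \<in> {x1 - \<delta>..x1 + \<delta>} \<Longrightarrow> b x \<le> B1"
  shows "principal_eigenvalue a l p \<le> exp (- p * (B2 - B1)) / ((t - s) * \<delta>)"
proof -
  obtain u V where s: "vsol (principal_eigenvalue a l p) u V" "u (-l) = 0" "u l = 0"
    "\<forall>x\<in>{-l<..<l}. u x > 0" "principal_eigenvalue a l p \<ge> 0"
    by (rule principal_char)
  define lam where "lam = principal_eigenvalue a l p"
  have lam0: "lam \<ge> 0" using s by (simp add: lam_def)
  have pos: "\<forall>x\<in>{-t..t}. u x > 0" using s(4) st by auto
  have tr: "lam * integral {-s..s} w \<le> (integral {-t..-s} w + integral {s..t} w) / (t - s)^2"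
    unfolding lam_def by (rule trapezoid[OF s(1) st pos s(5)])
  have whi: "w x \<le> exp (- p * B2)" if "x \<in> {s..t} \<union> {-t..-s}" for x
    using hi[OF that] p_pos by (simp add: w_def)
  have A1: "integral {-t..-s} w \<le> exp (- p * B2) * (t - s)"
  proof -
    have "norm (integral {-t..-s} w) \<le> exp (- p * B2) * (-s - - t)"
      by (rule integral_bound, simp add: st(2) less_imp_le, rule continuous_on_subset[OF w_cont])
         (use st whi w_pos in \<open>auto simp: abs_of_pos\<close>)
    then show ?thesis by simp
  qed
  have A2: "integral {s..t} w \<le> exp (- p * B2) * (t - s)"
  proof -
    have "norm (integral {s..t} w) \<le> exp (- p * B2) * (t - s)"
      by (rule integral_bound, simp add: st(2) less_imp_le, rule continuous_on_subset[OF w_cont])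
         (use st whi w_pos in \<open>auto simp: abs_of_pos\<close>)
    then show ?thesis by simp
  qed
  have sub: "{x1 - \<delta>..x1 + \<delta>} \<subseteq> {-l..l}" using d st by auto
  have Is: "integral {-s..s} w \<ge> exp (- p * B1) * (2 * \<delta>)"
  proof -
    have "integral {x1 - \<delta>..x1 + \<delta>} (\<lambda>_. exp (- p * B1)) \<le> integral {x1 - \<delta>..x1 + \<delta>} w"
    proof (rule integral_le)
      show "w integrable_on {x1 - \<delta>..x1 + \<delta>}"
        by (rule integrable_continuous_interval, rule continuous_on_subset[OF w_cont sub])
      show "exp (- p * B1) \<le> w x" if "x \<in> {x1 - \<delta>..x1 + \<delta>}" for x
        using lo[OF that] p_pos by (simp add: w_def)
    qed (rule integrable_continuous_interval, rule continuous_on_const)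
    also have "\<dots> \<le> integral {-s..s} w"
    proof (rule integral_subset_le[OF d(2)])
      show "w integrable_on {x1 - \<delta>..x1 + \<delta>}"
        by (rule integrable_continuous_interval, rule continuous_on_subset[OF w_cont sub])
      show "w integrable_on {-s..s}"
        by (rule integrable_continuous_interval, rule continuous_on_subset[OF w_cont]) (use st in auto)
    qed (use w_pos in \<open>auto intro: less_imp_le\<close>)
    finally show ?thesis using d by (simp add: mult.commute mult.left_commute)
  qed
  have Y: "exp (- p * B1) * (2 * \<delta>) > 0" using d by simp
  have "lam * (exp (- p * B1) * (2 * \<delta>)) \<le> lam * integral {-s..s} w"
    by (rule mult_left_mono[OF Is lam0])
  also have "\<dots> \<le> (integral {-t..-s} w + integral {s..t} w) / (t - s)^2" by (rule tr)
  also have "\<dots> \<le> (exp (- p * B2) * (t - s) + exp (- p * B2) * (t - s)) / (t - s)^2"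
    by (rule divide_right_mono) (use A1 A2 in linarith, simp)
  finally have lY: "lam * (exp (- p * B1) * (2 * \<delta>)) \<le> (exp (- p * B2) * (t - s) + exp (- p * B2) * (t - s)) / (t - s)^2" .
  have "lam \<le> (exp (- p * B2) * (t - s) + exp (- p * B2) * (t - s)) / (t - s)^2 / (exp (- p * B1) * (2 * \<delta>))"
    using lY by (simp only: pos_le_divide_eq[OF Y])
  also have "\<dots> = exp (- p * (B2 - B1)) / ((t - s) * \<delta>)"
  proof -
    have e: "exp (- p * (B2 - B1)) = exp (- p * B2) / exp (- p * B1)"
      by (simp add: exp_diff[symmetric] algebra_simps)
    show ?thesis unfolding e by (rule alg2) (use st d in auto)
  qed
  finally show ?thesis by (simp add: lam_def)
qed

end

lemma ln_bounds_limit: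
  fixes f lam :: "real \<Rightarrow> real" and b0 :: real
  assumes "\<And>e. e > 0 \<Longrightarrow> \<exists>c K. c > 0 \<and> K > 0 \<and> (\<forall>p. p > 0 \<longrightarrow>
              K * exp (- p * b0) \<le> lam p \<and> lam p \<le> exp (- p * (b0 - e)) / c)"
  shows "((\<lambda>p. (1 / p) * ln (1 / lam p)) \<longlongrightarrow> b0) at_top"
proof (rule tendstoI)
  fix e :: real assume e: "e > 0"
  obtain c K where cK: "c > 0" "K > 0" and bd: "\<And>p. p > 0 \<Longrightarrow> K * exp (- p * b0) \<le> lam p \<and> lam p \<le> exp (- p * (b0 - e / 2)) / c"
    using assms[of "e / 2"] e by auto
  define A where "A = \<bar>ln c\<bar> + \<bar>ln K\<bar>"
  define P0 where "P0 = (2 * A + 1) / e + 1"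
  have A0: "A \<ge> 0" by (simp add: A_def)
  have "(2 * A + 1) / e > 0" using A0 e by (intro divide_pos_pos) auto
  then have P0: "P0 > 0" by (simp add: P0_def)
  show "\<forall>\<^sub>F p in at_top. dist ((1 / p) * ln (1 / lam p)) b0 < e"
    unfolding eventually_at_top_linorder
  proof (intro exI allI impI)
    fix p assume p: "p \<ge> P0"
    then have pp: "p > 0" using P0 by simp
    have pe: "p * e > 2 * A"
    proof -
      have "P0 * e = 2 * A + 1 + e" using e by (simp add: P0_def field_simps)
      then have "P0 * e > 2 * A" using e by linarith
      moreover have "P0 * e \<le> p * e" using p e by simp
      ultimately show ?thesis by simp
    qed
    from bd[OF pp] have l1: "K * exp (- p * b0) \<le> lam p" and l2: "lam p \<le> exp (- p * (b0 - e / 2)) / c" by auto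
    have lpos: "lam p > 0" using l1 cK by (smt (verit) exp_gt_zero mult_pos_pos)
    have f: "(1 / p) * ln (1 / lam p) = - ln (lam p) / p" using lpos by (simp add: ln_div)
    have "ln (K * exp (- p * b0)) \<le> ln (lam p)" using l1 lpos cK by simp
    then have u1: "- ln (lam p) \<le> p * b0 - ln K" using cK by (simp add: ln_mult)
    have "ln (lam p) \<le> ln (exp (- p * (b0 - e / 2)) / c)" using l2 lpos cK by simp
    then have u2: "- ln (lam p) \<ge> p * (b0 - e / 2) + ln c" using cK by (simp add: ln_div)
    have "\<bar>ln K\<bar> < p * e" "\<bar>ln c\<bar> < p * e / 2" using pe A0 by (auto simp: A_def)
    then have "- ln (lam p) < p * (b0 + e)" "- ln (lam p) > p * (b0 - e)"
      using u1 u2 by (auto simp: algebra_simps)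
    then have "- ln (lam p) / p < b0 + e" "- ln (lam p) / p > b0 - e"
      using pp by (auto simp: field_simps)
    then show "dist ((1 / p) * ln (1 / lam p)) b0 < e" unfolding f dist_real_def by linarith
  qed
qed

theorem mainTheorem4:
  fixes a b :: "real \<Rightarrow> real" and l :: real
  assumes l_pos: "l > 0"
    and a_meas: "set_borel_measurable lborel {-l<..<l} a"
    and a_bdd: "\<exists>M. AE x in lborel. x \<in> {-l<..<l} \<longrightarrow> \<bar>a x\<bar> \<le> M"
    and a_odd: "AE x in lborel. x \<in> {-l<..<l} \<longrightarrow> a (- x) = - a x"
    and b_lip: "\<exists>L. L-lipschitz_on {-l..l} b"
    and b_prim: "AE x in lborel. x \<in> {-l<..<l} \<longrightarrow> (b has_real_derivative a x) (at x)"
    and B12: "Sup {x\<in>{0..l}. b x = (INF y\<in>{0..l}. b y)}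
              < Inf {x\<in>{0..l}. b x = (SUP y\<in>{0..l}. b y)}"
  shows "((\<lambda>p. (1 / p) * ln (1 / principal_eigenvalue a l p))
           \<longlongrightarrow> (SUP y\<in>{0..l}. b y) - (INF y\<in>{0..l}. b y)) at_top"
proof -
  obtain M0 where M0: "AE x in lborel. x \<in> {-l<..<l} \<longrightarrow> \<bar>a x\<bar> \<le> M0" using a_bdd by blast
  obtain L0 where L0: "L0-lipschitz_on {-l..l} b" using b_lip by blast
  have "AE x in lborel. x \<in> {-l<..<l} \<longrightarrow> (\<bar>a x\<bar> \<le> M0 \<and> (b has_real_derivative a x) (at x) \<and> a (- x) = - a x)"
    using M0 b_prim a_odd by eventually_elim auto
  then obtain N where N: "{x \<in> space lborel. \<not> (x \<in> {-l<..<l} \<longrightarrow> (\<bar>a x\<bar> \<le> M0 \<and> (b has_real_derivative a x) (at x) \<and> a (- x) = - a x))} \<subseteq> N"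
    "emeasure lborel N = 0" "N \<in> sets lborel" by (rule AE_E)
  have Nnull: "N \<in> null_sets lborel" using N by auto
  have Nneg: "negligible N"
    using null_sets_completionI[OF Nnull] by (simp add: negligible_iff_null_sets)
  have Nprop: "\<bar>a x\<bar> \<le> M0 \<and> (b has_real_derivative a x) (at x) \<and> a (- x) = - a x"
    if "x \<notin> N" "x \<in> {-l<..<l}" for x using N(1) that by auto
  have AEN: "AE x in lborel. x \<notin> N" by (rule AE_not_in[OF Nnull])
  define aa where "aa x = (if x \<in> N \<or> x \<notin> {-l<..<l} then 0 else a x)" for x
  have aa_bdd: "\<bar>aa x\<bar> \<le> max M0 0" for x using Nprop[of x] by (auto simp: aa_def)
  have aa_der: "(b has_real_derivative aa x) (at x)" if "x \<in> {-l<..<l}" "x \<notin> N" for x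
    using Nprop[OF that(2,1)] that by (simp add: aa_def)
  have aeq: "(AE x in lborel. x \<in> {-l<..<l} \<longrightarrow> - u'' x + p * a x * u' x = lam * u x) \<longleftrightarrow>
             (AE x in lborel. x \<in> {-l<..<l} \<longrightarrow> - u'' x + p * aa x * u' x = lam * u x)" for u'' u' u p lam
  proof
    assume A: "AE x in lborel. x \<in> {-l<..<l} \<longrightarrow> - u'' x + p * a x * u' x = lam * u x"
    show "AE x in lborel. x \<in> {-l<..<l} \<longrightarrow> - u'' x + p * aa x * u' x = lam * u x"
      using A AEN by eventually_elim (auto simp: aa_def)
  next
    assume A: "AE x in lborel. x \<in> {-l<..<l} \<longrightarrow> - u'' x + p * aa x * u' x = lam * u x"
    show "AE x in lborel. x \<in> {-l<..<l} \<longrightarrow> - u'' x + p * a x * u' x = lam * u x"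
      using A AEN by eventually_elim (auto simp: aa_def)
  qed
  have ep_eq: "positive_eigenpair a l p lam u = positive_eigenpair aa l p lam u" for p lam u
    unfolding positive_eigenpair_def aeq ..
  have pe_eq: "principal_eigenvalue a l p = principal_eigenvalue aa l p" for p
    unfolding principal_eigenvalue_def ep_eq ..
  have even0: "b (- x) = b x" if x: "x \<in> {0..l}" for x
  proof -
    define F where "F y = b y - b (- y)" for y
    have sub: "{0..x} \<subseteq> {-l..l}" using x by auto
    have l1: "L0-lipschitz_on {0..x} b" by (rule lipschitz_on_subset[OF L0 sub])
    have l2: "(L0 * 1)-lipschitz_on {0..x} (\<lambda>y. b (- y))"
    proof (rule lipschitz_on_compose2[of 1 _ "\<lambda>y. - y"])
      show "1-lipschitz_on {0..x} (\<lambda>y. - y)" using lipschitz_on_id[of "{0..x}"] by (simp add: lipschitz_on_minus_iff)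
      show "L0-lipschitz_on ((\<lambda>y. - y) ` {0..x}) b" by (rule lipschitz_on_subset[OF L0]) (use x in auto)
    qed
    have lipF: "(L0 + L0 * 1)-lipschitz_on {0..x} F" unfolding F_def by (rule lipschitz_on_diff[OF l1 l2])
    have negN': "negligible (uminus ` N)"
    proof (rule negligible_differentiable_image_negligible[OF order_refl Nneg])
      show "uminus differentiable_on N"
        unfolding differentiable_on_def differentiable_def
        using has_derivative_minus[OF has_derivative_ident] by blast
    qed
    have der: "(F has_real_derivative 0) (at y)" if y: "y \<in> {0<..<x}" "y \<notin> N \<union> uminus ` N" for y
    proof -
      have y1: "y \<in> {-l<..<l}" "y \<notin> N" using y x by auto
      have y2: "- y \<in> {-l<..<l}" "- y \<notin> N" using y x by (auto simp: image_iff)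
      have d1: "(b has_real_derivative a y) (at y)" using Nprop[OF y1(2,1)] by simp
      have d2: "(b has_real_derivative a (- y)) (at (- y))" using Nprop[OF y2(2,1)] by simp
      have odd: "a (- y) = - a y" using Nprop[OF y1(2,1)] by simp
      have d3: "((\<lambda>y. b (- y)) has_real_derivative a (- y) * (- 1)) (at y)"
      proof -
        have d4: "((\<lambda>y. - y) has_real_derivative -1) (at y)" by (auto intro!: derivative_eq_intros)
        show ?thesis using DERIV_chain2[of b "a (-y)" "\<lambda>y. - y" y "-1" UNIV] d2 d4 by simp
      qed
      show ?thesis unfolding F_def
        by (rule DERIV_cong[OF DERIV_diff[OF d1 d3]]) (simp add: odd)
    qed
    have "integral {0..x} (\<lambda>_. 0) = F x - F 0"
    proof (rule lip_ftc(2)[of 0 x "L0 + L0 * 1" F "N \<union> uminus ` N" "\<lambda>_. 0"])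
      show "negligible (N \<union> uminus ` N)" using Nneg negN' by simp
      show "(F has_real_derivative 0) (at y)" if "y \<in> {0<..<x}" "y \<notin> N \<union> uminus ` N" for y
        by (rule der[OF that])
    qed (use x lipF in auto)
    then show ?thesis by (simp add: F_def)
  qed
  have even: "b (- x) = b x" if "x \<in> {-l..l}" for x
  proof (cases "x \<ge> 0")
    case True then show ?thesis using even0[of x] that by auto
  next
    case False then show ?thesis using even0[of "- x"] that by auto
  qed
  have img: "b ` {-l..l} = b ` {0..l}"
  proof
    show "b ` {-l..l} \<subseteq> b ` {0..l}"
    proof
      fix z assume "z \<in> b ` {-l..l}"
      then obtain y where y: "y \<in> {-l..l}" "z = b y" by auto
      show "z \<in> b ` {0..l}"
      proof (cases "y \<ge> 0")
        case True then show ?thesis using y by auto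
      next
        case False then have "- y \<in> {0..l}" using y by auto
        then show ?thesis using y even[OF y(1)] by (metis image_eqI)
      qed
    qed
    show "b ` {0..l} \<subseteq> b ` {-l..l}" using l_pos by auto
  qed
  have bcont: "continuous_on {-l..l} b" by (rule lipschitz_on_continuous_on[OF L0])
  have bc0: "continuous_on {0..l} b" by (rule continuous_on_subset[OF bcont]) (use l_pos in auto)
  define b1 where "b1 = (INF y\<in>{0..l}. b y)"
  define b2 where "b2 = (SUP y\<in>{0..l}. b y)"
  have cpt: "compact (b ` {0..l})" by (rule compact_continuous_image[OF bc0]) simp
  have bdd: "bdd_below (b ` {0..l})" "bdd_above (b ` {0..l})"
    using compact_imp_bounded[OF cpt] by (auto intro: bounded_imp_bdd_below bounded_imp_bdd_above)
  have ne: "b ` {0..l} \<noteq> {}" using l_pos by auto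
  have b1in: "b1 \<in> b ` {0..l}" unfolding b1_def
    by (rule closed_contains_Inf[OF ne bdd(1) compact_imp_closed[OF cpt]])
  have b2in: "b2 \<in> b ` {0..l}" unfolding b2_def
    by (rule closed_contains_Sup[OF ne bdd(2) compact_imp_closed[OF cpt]])
  have brange: "b1 \<le> b y \<and> b y \<le> b2" if "y \<in> {-l..l}" for y
  proof -
    have "b y \<in> b ` {0..l}" using that img by blast
    then show ?thesis unfolding b1_def b2_def using bdd by (auto intro: cInf_lower cSup_upper)
  qed
  define Bs1 where "Bs1 = {x\<in>{0..l}. b x = b1}"
  define Bs2 where "Bs2 = {x\<in>{0..l}. b x = b2}"
  have Bs1c: "closed Bs1"
  proof -
    have lb: "x \<in> {0..l} \<Longrightarrow> b1 \<le> b x" for x using brange[of x] l_pos by auto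
    have "Bs1 = {x\<in>{0..l}. b x \<le> b1}" unfolding Bs1_def using lb by (auto simp: order.eq_iff)
    then show ?thesis using continuous_on_closed_Collect_le[OF bc0 continuous_on_const, of b1] by simp
  qed
  have Bs2c: "closed Bs2"
  proof -
    have ub: "x \<in> {0..l} \<Longrightarrow> b x \<le> b2" for x using brange[of x] l_pos by auto
    have "Bs2 = {x\<in>{0..l}. b2 \<le> b x}" unfolding Bs2_def using ub by (auto simp: order.eq_iff)
    then show ?thesis using continuous_on_closed_Collect_le[OF continuous_on_const bc0, of b2] by simp
  qed
  have Bs1ne: "Bs1 \<noteq> {}" using b1in by (auto simp: Bs1_def)
  have Bs2ne: "Bs2 \<noteq> {}" using b2in by (auto simp: Bs2_def)
  define x1 where "x1 = Sup Bs1"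
  define x2 where "x2 = Inf Bs2"
  have x1in: "x1 \<in> Bs1" unfolding x1_def
    by (rule closed_contains_Sup[OF Bs1ne _ Bs1c]) (auto simp: Bs1_def intro: bdd_aboveI)
  have x2in: "x2 \<in> Bs2" unfolding x2_def
    by (rule closed_contains_Inf[OF Bs2ne _ Bs2c]) (auto simp: Bs2_def intro: bdd_belowI)
  have x12: "x1 < x2" using B12 unfolding x1_def x2_def Bs1_def Bs2_def b1_def b2_def .
  have x1p: "0 \<le> x1" "b x1 = b1" using x1in by (auto simp: Bs1_def)
  have x2p: "x2 \<le> l" "b x2 = b2" using x2in by (auto simp: Bs2_def)
  have ext_eq: "Inf (b ` {-l..l}) = b1" "Sup (b ` {-l..l}) = b2"
    unfolding img b1_def b2_def by simp_all
  have lowerP: "exp (- p * (b2 - b1)) / (4 * l^2) \<le> principal_eigenvalue a l p" if p: "p > 0" for p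
  proof -
    interpret E: eig aa b l p "max M0 0" L0 N
      by unfold_locales (use l_pos p Nneg aa_bdd aa_der L0 in auto)
    show ?thesis using E.principal_lower unfolding pe_eq E.bmax_def E.bmin_def ext_eq .
  qed
  have upperP: "principal_eigenvalue a l p \<le> exp (- p * (B2 - B1)) / ((t - s) * \<delta>)"
    if p: "p > 0" and st: "0 < s" "s < t" "t < l" and d: "0 < \<delta>" "{y1 - \<delta>..y1 + \<delta>} \<subseteq> {-s..s}"
      and hi: "\<And>x. x \<in> {s..t} \<union> {-t..-s} \<Longrightarrow> b x \<ge> B2"
      and lo: "\<And>x. x \<in> {y1 - \<delta>..y1 + \<delta>} \<Longrightarrow> b x \<le> B1" for p s t \<delta> y1 B1 B2
  proof -
    interpret E: eig aa b l p "max M0 0" L0 N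
      by unfold_locales (use l_pos p Nneg aa_bdd aa_der L0 in auto)
    show ?thesis using E.principal_upper[OF st d hi lo] unfolding pe_eq .
  qed
  have "((\<lambda>p. (1 / p) * ln (1 / principal_eigenvalue a l p)) \<longlongrightarrow> b2 - b1) at_top"
  proof (rule ln_bounds_limit)
    fix e :: real assume e: "e > 0"
    have "\<forall>x\<in>{-l..l}. \<forall>\<epsilon>>0. \<exists>\<eta>>0. \<forall>y\<in>{-l..l}. dist y x < \<eta> \<longrightarrow> dist (b y) (b x) < \<epsilon>"
      using bcont unfolding continuous_on_iff .
    then have cx: "\<exists>\<eta>>0. \<forall>y\<in>{-l..l}. dist y x < \<eta> \<longrightarrow> dist (b y) (b x) < e / 2" if "x \<in> {-l..l}" for x
    proof -
      have "e / 2 > 0" using e by simp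
      then show ?thesis using \<open>\<forall>x\<in>{-l..l}. _\<close> that by blast
    qed
    obtain \<eta>2 where \<eta>2: "\<eta>2 > 0" "\<And>y. y \<in> {-l..l} \<Longrightarrow> dist y x2 < \<eta>2 \<Longrightarrow> dist (b y) (b x2) < e / 2"
      using cx[of x2] x1p x2p x12 by auto
    obtain \<eta>1 where \<eta>1: "\<eta>1 > 0" "\<And>y. y \<in> {-l..l} \<Longrightarrow> dist y x1 < \<eta>1 \<Longrightarrow> dist (b y) (b x1) < e / 2"
      using cx[of x1] x1p x2p x12 by auto
    define m where "m = max x1 (x2 - \<eta>2)"
    define s where "s = m + (x2 - m) / 3"
    define t where "t = m + 2 * (x2 - m) / 3"
    define \<delta> where "\<delta> = min (\<eta>1 / 2) (s - x1)"
    have m: "x1 \<le> m" "x2 - \<eta>2 \<le> m" "m < x2" using x12 \<eta>2 by (auto simp: m_def)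
    have st: "0 < s" "s < t" "t < l" "m < s" "t < x2"
      using m x1p x2p unfolding s_def t_def by (simp_all add: field_simps; linarith)+
    have d: "0 < \<delta>" "\<delta> \<le> s - x1" "\<delta> < \<eta>1" using \<eta>1 st m by (auto simp: \<delta>_def)
    have dsub: "{x1 - \<delta>..x1 + \<delta>} \<subseteq> {-s..s}" using d x1p by auto
    have hi: "b x \<ge> b2 - e / 2" if x: "x \<in> {s..t} \<union> {-t..-s}" for x
    proof -
      have hi0: "b y \<ge> b2 - e / 2" if y: "y \<in> {s..t}" for y
      proof -
        have "y \<in> {-l..l}" "dist y x2 < \<eta>2" using y st m by (auto simp: dist_real_def)
        then have "dist (b y) (b x2) < e / 2" by (rule \<eta>2(2))
        then have "\<bar>b y - b x2\<bar> < e / 2" by (simp only: dist_real_def)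
        then show ?thesis using x2p unfolding abs_less_iff by linarith
      qed
      show ?thesis
      proof (cases "x \<in> {s..t}")
        case True then show ?thesis by (rule hi0)
      next
        case False
        then have "- x \<in> {s..t}" "x \<in> {-l..l}" using x st by auto
        then show ?thesis using hi0[of "- x"] even[of x] by simp
      qed
    qed
    have lo: "b x \<le> b1 + e / 2" if x: "x \<in> {x1 - \<delta>..x1 + \<delta>}" for x
    proof -
      have "x \<in> {-l..l}" "dist x x1 < \<eta>1" using x dsub st d by (auto simp: dist_real_def)
      then have "dist (b x) (b x1) < e / 2" by (rule \<eta>1(2))
      then have "\<bar>b x - b x1\<bar> < e / 2" by (simp only: dist_real_def)
      then show ?thesis using x1p unfolding abs_less_iff by linarith
    qed
    show "\<exists>c K. c > 0 \<and> K > 0 \<and> (\<forall>p. p > 0 \<longrightarrow>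
              K * exp (- p * (b2 - b1)) \<le> principal_eigenvalue a l p \<and>
              principal_eigenvalue a l p \<le> exp (- p * (b2 - b1 - e)) / c)"
    proof (intro exI conjI allI impI)
      show "(t - s) * \<delta> > 0" using st d by simp
      show "1 / (4 * l^2) > 0" using l_pos by simp
      fix p :: real assume p: "p > 0"
      show "1 / (4 * l^2) * exp (- p * (b2 - b1)) \<le> principal_eigenvalue a l p"
        using lowerP[OF p] by simp
      have "principal_eigenvalue a l p \<le> exp (- p * ((b2 - e / 2) - (b1 + e / 2))) / ((t - s) * \<delta>)"
        by (rule upperP[OF p st(1-3) d(1) dsub hi lo])
      then show "principal_eigenvalue a l p \<le> exp (- p * (b2 - b1 - e)) / ((t - s) * \<delta>)"
        by (simp add: algebra_simps)
    qed
  qed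
  then show ?thesis by (simp add: b1_def b2_def)
qed

end
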